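(* Define for integers $0\le r_1,r_2\le m$ the entire function $$\omega^{r_1,r_2}(t,m)=\frac{m!}{\Gamma(t+1)\,\Gamma(r_2-t+1)\,\Gamma(r_1-r_2+t+1)\,\Gamma(m-r_1-t+1)}$$ (with $1/\Gamma$ entire). Then for $0\le r_1,r_2\le n$, $0\le s\le N(r_1,r_2)$ and all $t\in\mathbb C$, $$\omega^{r_1,r_2}(t,n)\,\lambda_s^{r_1,r_2}(t,n)=\frac{[n]_{2s}}{[n-r_1]_s\,[r_2]_s}\,\nabla^s\,\omega^{r_1-s,r_2-s}(t,n-2s),$$ where $\nabla$ acts in the variable $t$.
   Context: For a finite set $\Omega$ with $|\Omega|=n\ge1$, let $G=S(\Omega)$, $X=\mathcal P(\Omega)$, $X_r=\{x\in X:|x|=r\}$, with $G$ acting on $L^2(X)$ (complex functions on $X$; $L^2(X_r)$ = functions supported on $X_r$) by $(\rho(g)\psi)(x)=\psi(g^{-1}x)$. For $0\le s\le\min(r,n-r)$, $L^2(X_r)_s$ is the unique irreducible $G$-subspace of $L^2(X_r)$ isomorphic to the irreducible representation associated with the partition $(n-s,s)$. $N(r_1,r_2)=\min(r_1,n-r_1,r_2,n-r_2)$. For $0\le s\le N(r_1,r_2)$, $\Lambda_s^{r_1,r_2}$ is a $G$-equivariant map $L^2(X)\to L^2(X)$ sending $L^2(X_{r_1})_s$ into $L^2(X_{r_2})_s$ and vanishing on its orthogonal complement, with kernel $\lambda$ defined on integers $\max(0,r_2-r_1)\le k\le\min(n-r_1,r_2)$ by $(\Lambda_s^{r_1,r_2}\psi)(x_2)=\sum_{x_1\in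 X_{r_1}}\lambda(|x_2\setminus x_1|)\psi(x_1)$. The kernel agrees on its domain with a unique polynomial of degree $s$ which is nonzero at $0$; $\Lambda_s^{r_1,r_2}$ is normalized so that this polynomial takes the value $1$ at $t=0$, and this polynomial is denoted $\lambda_s^{r_1,r_2}(t,n)$. $\nabla h(t)=h(t)-h(t-1)$; $[\alpha]_k=\alpha(\alpha-1)\cdots(\alpha-k+1)$. *)

theory Defs
  imports "HOL-Analysis.Analysis" "HOL-Computational_Algebra.Polynomial"
begin

text \<open>Ground set Omega = {..<n}; functions on subsets of Omega are nat set => complex.
  G = S(Omega) is the set of permutations g with g permutes {..<n}.\<close>

definition act :: "(nat \<Rightarrow> nat) \<Rightarrow> (nat set \<Rightarrow> complex) \<Rightarrow> (nat set \<Rightarrow> complex)" where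
  "act g \<psi> = (\<lambda>x. \<psi> (inv g ` x))"

definition L2X :: "nat \<Rightarrow> (nat set \<Rightarrow> complex) set" where
  "L2X n = {\<psi>. \<forall>x. \<psi> x \<noteq> 0 \<longrightarrow> x \<subseteq> {..<n}}"

definition L2 :: "nat \<Rightarrow> nat \<Rightarrow> (nat set \<Rightarrow> complex) set" where
  "L2 n r = {\<psi>. \<forall>x. \<psi> x \<noteq> 0 \<longrightarrow> x \<subseteq> {..<n} \<and> card x = r}"

definition csubspace :: "(nat set \<Rightarrow> complex) set \<Rightarrow> bool" where
  "csubspace V \<longleftrightarrow> (\<lambda>_. 0) \<in> V \<and> (\<forall>\<phi>\<in>V. \<forall>\<psi>\<in>V. (\<lambda>x. \<phi> x + \<psi> x) \<in> V)
     \<and> (\<forall>c. \<forall>\<psi>\<in>V. (\<lambda>x. c * \<psi> x) \<in> V)"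

definition Gsubspace :: "nat \<Rightarrow> (nat set \<Rightarrow> complex) set \<Rightarrow> bool" where
  "Gsubspace n V \<longleftrightarrow> V \<subseteq> L2X n \<and> csubspace V \<and> (\<forall>g. g permutes {..<n} \<longrightarrow> (\<forall>\<psi>\<in>V. act g \<psi> \<in> V))"

definition Girreducible :: "nat \<Rightarrow> (nat set \<Rightarrow> complex) set \<Rightarrow> bool" where
  "Girreducible n V \<longleftrightarrow> Gsubspace n V \<and> V \<noteq> {\<lambda>_. 0} \<and>
     (\<forall>W. Gsubspace n W \<and> W \<subseteq> V \<longrightarrow> W = {\<lambda>_. 0} \<or> W = V)"

definition Giso :: "nat \<Rightarrow> (nat set \<Rightarrow> complex) set \<Rightarrow> (nat set \<Rightarrow> complex) set \<Rightarrow> bool" where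
  "Giso n V W \<longleftrightarrow> (\<exists>f. bij_betw f V W
     \<and> (\<forall>\<phi>\<in>V. \<forall>\<psi>\<in>V. f (\<lambda>x. \<phi> x + \<psi> x) = (\<lambda>x. f \<phi> x + f \<psi> x))
     \<and> (\<forall>c. \<forall>\<psi>\<in>V. f (\<lambda>x. c * \<psi> x) = (\<lambda>x. c * f \<psi> x))
     \<and> (\<forall>g. g permutes {..<n} \<longrightarrow> (\<forall>\<psi>\<in>V. f (act g \<psi>) = act g (f \<psi>))))"

definition cspan :: "(nat set \<Rightarrow> complex) set \<Rightarrow> (nat set \<Rightarrow> complex) set" where
  "cspan S = {\<psi>. \<exists>F c. finite F \<and> F \<subseteq> S \<and> \<psi> = (\<lambda>x. \<Sum>f\<in>F. c f * f x)}"

text \<open>Polytabloid of shape (n-s,s): the tabloids of shape (n-s,s) are identified with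
  s-subsets of Omega (the second row). For a tableau whose first s columns are {a i, b i},
  the polytabloid is the signed sum over the column group.\<close>
definition polytabloid :: "nat \<Rightarrow> (nat \<Rightarrow> nat) \<Rightarrow> (nat \<Rightarrow> nat) \<Rightarrow> (nat set \<Rightarrow> complex)" where
  "polytabloid s a b = (\<lambda>x. \<Sum>E\<in>Pow {..<s}.
      (-1) ^ card E * (if x = (\<lambda>i. if i \<in> E then a i else b i) ` {..<s} then 1 else 0))"

text \<open>Specht module S^(n-s,s) realised inside L^2(X_s) (the permutation module M^(n-s,s)).\<close>
definition Specht :: "nat \<Rightarrow> nat \<Rightarrow> (nat set \<Rightarrow> complex) set" where
  "Specht n s = cspan {polytabloid s a b | a b.
      (\<forall>i<s. a i < n \<and> b i < n) \<and> inj_on a {..<s} \<and> inj_on b {..<s}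
      \<and> a ` {..<s} \<inter> b ` {..<s} = {}}"

definition L2comp :: "nat \<Rightarrow> nat \<Rightarrow> nat \<Rightarrow> (nat set \<Rightarrow> complex) set" where
  "L2comp n r s = (THE V. Girreducible n V \<and> V \<subseteq> L2 n r \<and> Giso n V (Specht n s))"

definition inner_L2 :: "nat \<Rightarrow> (nat set \<Rightarrow> complex) \<Rightarrow> (nat set \<Rightarrow> complex) \<Rightarrow> complex" where
  "inner_L2 n \<phi> \<psi> = (\<Sum>x\<in>Pow {..<n}. \<phi> x * cnj (\<psi> x))"

definition kernel_op :: "nat \<Rightarrow> nat \<Rightarrow> nat \<Rightarrow> (nat \<Rightarrow> complex) \<Rightarrow> (nat set \<Rightarrow> complex) \<Rightarrow> (nat set \<Rightarrow> complex)" where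
  "kernel_op n r1 r2 lam \<psi> = (\<lambda>x2. if x2 \<subseteq> {..<n} \<and> card x2 = r2
      then (\<Sum>x1\<in>{x1. x1 \<subseteq> {..<n} \<and> card x1 = r1}. lam (card (x2 - x1)) * \<psi> x1) else 0)"

definition Nmin :: "nat \<Rightarrow> nat \<Rightarrow> nat \<Rightarrow> nat" where
  "Nmin n r1 r2 = min (min r1 (n - r1)) (min r2 (n - r2))"

definition lambda_poly :: "nat \<Rightarrow> nat \<Rightarrow> nat \<Rightarrow> nat \<Rightarrow> complex poly" where
  "lambda_poly n r1 r2 s = (THE p. degree p = s \<and> poly p 0 = 1 \<and>
     (let \<Lambda> = kernel_op n r1 r2 (\<lambda>k. poly p (of_nat k)) in
       (\<forall>\<psi>\<in>L2comp n r1 s. \<Lambda> \<psi> \<in> L2comp n r2 s) \<and>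
       (\<forall>\<psi>\<in>L2X n. (\<forall>\<phi>\<in>L2comp n r1 s. inner_L2 n \<psi> \<phi> = 0) \<longrightarrow> \<Lambda> \<psi> = (\<lambda>_. 0))))"

definition omega :: "nat \<Rightarrow> nat \<Rightarrow> complex \<Rightarrow> nat \<Rightarrow> complex" where
  "omega r1 r2 t m = fact m * rGamma (t + 1) * rGamma (of_nat r2 - t + 1)
     * rGamma (of_nat r1 - of_nat r2 + t + 1) * rGamma (of_nat m - of_nat r1 - t + 1)"

definition nabla :: "(complex \<Rightarrow> complex) \<Rightarrow> complex \<Rightarrow> complex" where
  "nabla h = (\<lambda>t. h t - h (t - 1))"

definition ffact_c :: "complex \<Rightarrow> nat \<Rightarrow> complex" where
  "ffact_c \<alpha> k = (\<Prod>i<k. \<alpha> - of_nat i)"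

end

theory Submission
  imports Defs
begin


fun Rod :: "nat \<Rightarrow> nat \<Rightarrow> nat \<Rightarrow> nat \<Rightarrow> complex poly" where
  "Rod 0 a b m = 1"
| "Rod (Suc i) a b m = [:of_nat b, -1:] * [:of_nat m - of_nat a, -1:] * Rod i (a-1) (b-1) (m-2)
     - [:0, 1:] * [:of_nat a - of_nat b, 1:] * pcompose (Rod i (a-1) (b-1) (m-2)) [:-1, 1:]"

lemma rG_shift: "w = z + 1 \<Longrightarrow> rGamma (z::complex) = z * rGamma w"
  using rGamma_plus1[of z] by simp

lemma nabla_omega_step:
  fixes a b m :: nat and P :: "complex poly"
  shows "nabla (\<lambda>u. omega a b u m * poly P u) t =
    fact m / fact (m+2) * omega (a+1) (b+1) t (m+2) *
    poly ([:of_nat (b+1), -1:] * [:of_nat (m+2) - of_nat (a+1), -1:] * P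
     - [:0, 1:] * [:of_nat (a+1) - of_nat (b+1), 1:] * pcompose P [:-1, 1:]) t"
proof -
  define A where "A = rGamma (t+1) * rGamma (of_nat b - t + 2) * rGamma (of_nat a - of_nat b + t + 1)
      * rGamma (of_nat m - of_nat a - t + 2)"
  have e1: "rGamma (of_nat b - t + 1) = (of_nat b - t + 1) * rGamma (of_nat b - t + 2)"
    by (rule rG_shift) simp
  have e2: "rGamma (of_nat m - of_nat a - t + 1) = (of_nat m - of_nat a - t + 1) * rGamma (of_nat m - of_nat a - t + 2)"
    by (rule rG_shift) simp
  have e3: "rGamma (t - 1 + 1) = t * rGamma (t + 1)"
    using rG_shift[of "t+1" t] by simp
  have e4: "rGamma (of_nat a - of_nat b + (t - 1) + 1) = (of_nat a - of_nat b + t) * rGamma (of_nat a - of_nat b + t + 1)"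
    using rG_shift[of "of_nat a - of_nat b + t + 1" "of_nat a - of_nat b + t"] by (simp add: algebra_simps)
  have e5: "rGamma (of_nat b - (t - 1) + 1) = rGamma (of_nat b - t + 2)"
    by (rule arg_cong[where f=rGamma]) simp
  have e6: "rGamma (of_nat m - of_nat a - (t - 1) + 1) = rGamma (of_nat m - of_nat a - t + 2)"
    by (rule arg_cong[where f=rGamma]) simp
  have o1: "omega a b t m = fact m * (of_nat b - t + 1) * (of_nat m - of_nat a - t + 1) * A"
    unfolding omega_def A_def e1 e2 by (simp add: algebra_simps)
  have o2: "omega a b (t-1) m = fact m * t * (of_nat a - of_nat b + t) * A"
    unfolding omega_def A_def e3 e4 e5 e6 by (simp add: algebra_simps)
  have e7: "rGamma (of_nat (b+1) - t + 1) = rGamma (of_nat b - t + 2)"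
    by (rule arg_cong[where f=rGamma]) simp
  have e8: "rGamma (of_nat (m+2) - of_nat (a+1) - t + 1) = rGamma (of_nat m - of_nat a - t + 2)"
    by (rule arg_cong[where f=rGamma]) simp
  have e9: "rGamma (of_nat (a+1) - of_nat (b+1) + t + 1) = rGamma (of_nat a - of_nat b + t + 1)"
    by (rule arg_cong[where f=rGamma]) simp
  have o3: "omega (a+1) (b+1) t (m+2) = fact (m+2) * A"
    unfolding omega_def A_def e7 e8 e9 by (simp add: algebra_simps)
  have fm: "(fact (m+2) :: complex) \<noteq> 0" by (rule fact_nonzero)
  have r: "fact m / fact (m+2) * omega (a+1) (b+1) t (m+2) = (fact m :: complex) * A"
    unfolding o3 using fm by simp
  show ?thesis
    unfolding r unfolding nabla_def o1 o2
    by (simp add: poly_pcompose algebra_simps)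
qed

lemma nabla_cmult: "nabla (\<lambda>u. c * h u) = (\<lambda>t. c * nabla h t)"
  unfolding nabla_def by (simp add: algebra_simps)

lemma rodrigues:
  "i \<le> a \<Longrightarrow> i \<le> b \<Longrightarrow> 2*i \<le> m \<Longrightarrow>
   (nabla ^^ i) (\<lambda>u. omega (a-i) (b-i) u (m-2*i)) =
   (\<lambda>t. fact (m-2*i) / fact m * omega a b t m * poly (Rod i a b m) t)"
proof (induction i arbitrary: a b m)
  case 0
  then show ?case by (simp add: fact_nonzero)
next
  case (Suc i)
  define a' where "a' = a - 1"
  define b' where "b' = b - 1"
  define m' where "m' = m - 2"
  have aa: "a = a' + 1" "b = b' + 1" "m = m' + 2" using Suc.prems unfolding a'_def b'_def m'_def by auto
  have IH: "(nabla ^^ i) (\<lambda>u. omega (a'-i) (b'-i) u (m'-2*i)) =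
   (\<lambda>t. fact (m'-2*i) / fact m' * omega a' b' t m' * poly (Rod i a' b' m') t)"
    using Suc.prems by (intro Suc.IH) (auto simp: a'_def b'_def m'_def)
  have eqs: "a - Suc i = a' - i" "b - Suc i = b' - i" "m - 2 * Suc i = m' - 2*i" using aa by auto
  have R: "Rod (Suc i) a b m = [:of_nat (b'+1), -1:] * [:of_nat (m'+2) - of_nat (a'+1), -1:] * Rod i a' b' m'
     - [:0, 1:] * [:of_nat (a'+1) - of_nat (b'+1), 1:] * pcompose (Rod i a' b' m') [:-1, 1:]"
    using aa by (simp add: a'_def b'_def m'_def)
  have fm: "(fact m' :: complex) \<noteq> 0" by (rule fact_nonzero)
  have gen: "\<And>x c F X::complex. c \<noteq> 0 \<Longrightarrow> x / c * (c / F * X) = x / F * X"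
    by (simp add: field_simps)
  show ?case
  proof (rule ext)
    fix t
    have "(nabla ^^ Suc i) (\<lambda>u. omega (a - Suc i) (b - Suc i) u (m - 2 * Suc i)) t
       = nabla (\<lambda>t. fact (m'-2*i) / fact m' * (omega a' b' t m' * poly (Rod i a' b' m') t)) t"
      unfolding funpow.simps comp_def eqs IH by (simp add: mult.assoc)
    also have "\<dots> = fact (m'-2*i) / fact m' * nabla (\<lambda>t. omega a' b' t m' * poly (Rod i a' b' m') t) t"
      by (simp add: nabla_def algebra_simps)
    also have "\<dots> = fact (m'-2*i) / fact m' * (fact m' / fact (m'+2) * (omega (a'+1) (b'+1) t (m'+2) * poly (Rod (Suc i) a b m) t))"
      unfolding nabla_omega_step R by (simp only: mult.assoc)
    also have "\<dots> = fact (m'-2*i) / fact (m'+2) * (omega (a'+1) (b'+1) t (m'+2) * poly (Rod (Suc i) a b m) t)"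
      by (rule gen[OF fm])
    finally show "(nabla ^^ Suc i) (\<lambda>u. omega (a - Suc i) (b - Suc i) u (m - 2 * Suc i)) t =
         fact (m - 2 * Suc i) / fact m * omega a b t m * poly (Rod (Suc i) a b m) t"
      unfolding eqs by (simp only: aa mult.assoc)
  qed
qed

definition shd :: "complex poly \<Rightarrow> complex poly" where
  "shd p = pcompose p [:-1, 1:] - p"

lemma shd_pCons: "shd (pCons c p) = [:-1, 1:] * shd p - p"
  unfolding shd_def
  by (rule poly_eq_poly_eq_iff[THEN iffD1], rule ext) (simp add: poly_pcompose algebra_simps)

lemma shd_deg0: "degree p = 0 \<Longrightarrow> shd p = 0"
  by (auto elim!: degree_eq_zeroE simp: shd_def)

lemma coeff_lin_mult_Suc: "coeff ([:x, y:] * P) (Suc j) = x * coeff P (Suc j) + y * coeff P j"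
  by (simp add: mult_pCons_left)

lemma shd_deg:
  "degree p \<le> Suc k \<Longrightarrow> degree (shd p) \<le> k \<and> coeff (shd p) k = - of_nat (Suc k) * coeff p (Suc k)"
proof (induction p arbitrary: k rule: pCons_induct)
  case 0
  then show ?case by (simp add: shd_def)
next
  case (pCons c p)
  have dp: "degree p \<le> k"
    using pCons.prems by (auto simp: degree_pCons_eq_if split: if_splits)
  show ?case
  proof (cases k)
    case 0
    then have "degree p = 0" using dp by simp
    then have "shd p = 0" by (rule shd_deg0)
    then show ?thesis unfolding shd_pCons using 0 \<open>degree p = 0\<close> by simp
  next
    case (Suc k')
    have IH: "degree (shd p) \<le> k' \<and> coeff (shd p) k' = - of_nat (Suc k') * coeff p (Suc k')"
      using pCons.IH dp Suc by simp
    have d1: "degree ([:-1, 1:] * shd p) \<le> k"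
      using degree_mult_le[of "[:-1, 1:]" "shd p"] IH Suc by (simp add: degree_pCons_eq_if split: if_splits)
    have c0: "coeff (shd p) (Suc k') = 0" using IH by (simp add: coeff_eq_0)
    have "coeff ([:-1, 1:] * shd p) k = coeff (shd p) k'"
      unfolding Suc coeff_lin_mult_Suc using c0 by simp
    then have "coeff (shd (pCons c p)) k = - of_nat (Suc k) * coeff (pCons c p) (Suc k)"
    proof -
      have "coeff (shd (pCons c p)) k = coeff (shd p) k' - coeff p (Suc k')"
        unfolding shd_pCons coeff_diff using \<open>coeff ([:-1, 1:] * shd p) k = coeff (shd p) k'\<close> Suc by simp
      also have "\<dots> = - of_nat (Suc k') * coeff p (Suc k') - coeff p (Suc k')"
        using IH by simp
      also have "\<dots> = - of_nat (Suc k) * coeff (pCons c p) (Suc k)"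
        using Suc by (simp add: algebra_simps)
      finally show ?thesis .
    qed
    moreover have "degree (shd (pCons c p)) \<le> k"
      unfolding shd_pCons using d1 dp by (intro degree_diff_le)
    ultimately show ?thesis by simp
  qed
qed

lemma Rod_alt:
  "Rod (Suc i) a b m = [:of_nat b * (of_nat m - of_nat a), - of_nat m:] * Rod i (a-1) (b-1) (m-2)
     - [:0, of_nat a - of_nat b, 1:] * shd (Rod i (a-1) (b-1) (m-2))"
  unfolding Rod.simps shd_def
  by (rule poly_eq_poly_eq_iff[THEN iffD1], rule ext) (simp add: poly_pcompose algebra_simps)

lemma Rod_degree_aux: "2*i \<le> m \<Longrightarrow> degree (Rod i a b m) \<le> i \<and> coeff (Rod i a b m) i \<noteq> 0"
proof (induction i arbitrary: a b m)
  case 0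
  then show ?case by simp
next
  case (Suc i)
  define P where "P = Rod i (a-1) (b-1) (m-2)"
  have IH: "degree P \<le> i" "coeff P i \<noteq> 0" using Suc by (auto simp: P_def)
  have R: "Rod (Suc i) a b m = [:of_nat b * (of_nat m - of_nat a), - of_nat m:] * P
     - [:0, of_nat a - of_nat b, 1:] * shd P" unfolding P_def by (rule Rod_alt)
  have d1: "degree ([:of_nat b * (of_nat m - of_nat a), - of_nat m:] * P) \<le> Suc i"
    using degree_mult_le[of "[:of_nat b * (of_nat m - of_nat a), - of_nat m:]" P] IH
    by (simp add: degree_pCons_eq_if split: if_splits)
  have c1: "coeff ([:of_nat b * (of_nat m - of_nat a), - of_nat m:] * P) (Suc i) = - of_nat m * coeff P i"
    unfolding coeff_lin_mult_Suc using IH by (simp add: coeff_eq_0)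
  have "degree ([:0, of_nat a - of_nat b, 1:] * shd P) \<le> Suc i \<and>
        coeff ([:0, of_nat a - of_nat b, 1:] * shd P) (Suc i) = - of_nat i * coeff P i"
  proof (cases i)
    case 0
    then have "shd P = 0" using IH shd_deg0 by simp
    then show ?thesis using 0 by simp
  next
    case (Suc k)
    have S: "degree (shd P) \<le> k" "coeff (shd P) k = - of_nat (Suc k) * coeff P (Suc k)"
      using shd_deg[of P k] IH Suc by auto
    have "degree ([:0, of_nat a - of_nat b, 1:] * shd P) \<le> 2 + k"
      using degree_mult_le[of "[:0, of_nat a - of_nat b, 1:]" "shd P"] S
      by (simp add: degree_pCons_eq_if split: if_splits)
    moreover have "coeff ([:0, of_nat a - of_nat b, 1:] * shd P) (Suc i) = coeff (shd P) k"
      using S Suc by (simp add: mult_pCons_left coeff_eq_0)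
    ultimately show ?thesis using S Suc by simp
  qed
  then have d2: "degree ([:0, of_nat a - of_nat b, 1:] * shd P) \<le> Suc i"
    and c2: "coeff ([:0, of_nat a - of_nat b, 1:] * shd P) (Suc i) = - of_nat i * coeff P i" by auto
  have "coeff (Rod (Suc i) a b m) (Suc i) = (of_nat i - of_nat m) * coeff P i"
    unfolding R coeff_diff c1 c2 by (simp add: algebra_simps)
  moreover have "(of_nat i - of_nat m :: complex) \<noteq> 0" using Suc.prems by simp
  ultimately show ?case unfolding R using d1 d2 IH
    by (auto intro: degree_diff_le)
qed

lemma Rod_degree: "2*i \<le> m \<Longrightarrow> degree (Rod i a b m) = i"
  using Rod_degree_aux[of i m a b] by (meson antisym le_degree)

lemma Rod_at0: "i \<le> a \<Longrightarrow> i \<le> b \<Longrightarrow> 2*i \<le> m \<Longrightarrow>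
  poly (Rod i a b m) 0 = ffact_c (of_nat b) i * ffact_c (of_nat m - of_nat a) i"
proof (induction i arbitrary: a b m)
  case 0
  then show ?case by (simp add: ffact_c_def)
next
  case (Suc i)
  have IH: "poly (Rod i (a-1) (b-1) (m-2)) 0 = ffact_c (of_nat (b-1)) i * ffact_c (of_nat (m-2) - of_nat (a-1)) i"
    using Suc by auto
  have e1: "of_nat (b-1) = (of_nat b - 1 :: complex)" "of_nat (m-2) - of_nat (a-1) = (of_nat m - of_nat a - 1 :: complex)"
    using Suc.prems by (auto simp: of_nat_diff)
  have ff: "ffact_c x (Suc i) = x * ffact_c (x - 1) i" for x
    unfolding ffact_c_def prod.lessThan_Suc_shift by (simp add: algebra_simps)
  show ?case
    unfolding Rod.simps poly_diff poly_mult IH e1 ff by (simp add: algebra_simps)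
qed


lemma csubspace_zero: "csubspace V \<Longrightarrow> (\<lambda>_. 0) \<in> V"
  unfolding csubspace_def by auto

lemma csubspace_add: "csubspace V \<Longrightarrow> \<phi> \<in> V \<Longrightarrow> \<psi> \<in> V \<Longrightarrow> (\<lambda>x. \<phi> x + \<psi> x) \<in> V"
  unfolding csubspace_def by auto

lemma csubspace_scale: "csubspace V \<Longrightarrow> \<psi> \<in> V \<Longrightarrow> (\<lambda>x. c * \<psi> x) \<in> V"
  unfolding csubspace_def by auto

lemma csubspace_lin: "csubspace V \<Longrightarrow> \<phi> \<in> V \<Longrightarrow> \<psi> \<in> V \<Longrightarrow> (\<lambda>x. c * \<phi> x + d * \<psi> x) \<in> V"
  by (intro csubspace_add csubspace_scale)

lemma csubspace_diff: "csubspace V \<Longrightarrow> \<phi> \<in> V \<Longrightarrow> \<psi> \<in> V \<Longrightarrow> (\<lambda>x. \<phi> x - \<psi> x) \<in> V"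
  using csubspace_lin[of V \<phi> \<psi> 1 "-1"] by simp

lemma csubspace_sum: assumes V: "csubspace V" shows "finite F \<Longrightarrow> (\<And>f. f \<in> F \<Longrightarrow> g f \<in> V) \<Longrightarrow> (\<lambda>x. \<Sum>f\<in>F. g f x) \<in> V"
proof (induction F rule: finite_induct)
  case empty
  then show ?case using V by (simp add: csubspace_zero)
next
  case (insert f F)
  then show ?case using V csubspace_add[of V "g f" "\<lambda>x. \<Sum>f\<in>F. g f x"] by simp
qed

lemma cspan_sub: "S \<subseteq> cspan S"
proof
  fix f assume "f \<in> S"
  then show "f \<in> cspan S"
    unfolding cspan_def by (intro CollectI exI[of _ "{f}"] exI[of _ "\<lambda>_. 1"]) auto
qed

lemma cspan_least: "csubspace V \<Longrightarrow> S \<subseteq> V \<Longrightarrow> cspan S \<subseteq> V"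
  unfolding cspan_def
  by (auto intro!: csubspace_sum csubspace_scale)

lemma sum_if_sub: "finite A \<Longrightarrow> B \<subseteq> A \<Longrightarrow> (\<Sum>x\<in>A. if x \<in> B then g x else 0) = sum g B"
  using sum.inter_restrict[of A g B] by (simp add: Int_absorb1)

lemma cspan_csubspace: "csubspace (cspan S)"
  unfolding csubspace_def
proof (intro conjI ballI allI)
  show "(\<lambda>_. 0) \<in> cspan S" unfolding cspan_def by (intro CollectI exI[of _ "{}"]) auto
next
  fix \<phi> \<psi> assume A: "\<phi> \<in> cspan S" "\<psi> \<in> cspan S"
  obtain F1 c1 where F1: "finite F1" "F1 \<subseteq> S" "\<phi> = (\<lambda>x. \<Sum>f\<in>F1. c1 f * f x)"
    using A(1) unfolding cspan_def by blast
  obtain F2 c2 where F2: "finite F2" "F2 \<subseteq> S" "\<psi> = (\<lambda>x. \<Sum>f\<in>F2. c2 f * f x)"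
    using A(2) unfolding cspan_def by blast
  note F = F1 F2
  define c where "c f = (if f \<in> F1 then c1 f else 0) + (if f \<in> F2 then c2 f else 0)" for f
  have "(\<lambda>x. \<phi> x + \<psi> x) = (\<lambda>x. \<Sum>f\<in>F1 \<union> F2. c f * f x)"
  proof
    fix x
    have "(\<Sum>f\<in>F1 \<union> F2. c f * f x) = (\<Sum>f\<in>F1 \<union> F2. (if f \<in> F1 then c1 f * f x else 0) + (if f \<in> F2 then c2 f * f x else 0))"
      by (rule sum.cong) (simp_all add: c_def distrib_right)
    also have "\<dots> = (\<Sum>f\<in>F1 \<union> F2. (if f \<in> F1 then c1 f * f x else 0)) + (\<Sum>f\<in>F1 \<union> F2. (if f \<in> F2 then c2 f * f x else 0))"
      by (rule sum.distrib)
    also have "\<dots> = (\<Sum>f\<in>F1. c1 f * f x) + (\<Sum>f\<in>F2. c2 f * f x)"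
      using F by (simp add: sum_if_sub)
    finally show "\<phi> x + \<psi> x = (\<Sum>f\<in>F1 \<union> F2. c f * f x)" using F by simp
  qed
  then show "(\<lambda>x. \<phi> x + \<psi> x) \<in> cspan S" unfolding cspan_def using F
    by (intro CollectI exI[of _ "F1 \<union> F2"] exI[of _ c]) simp
next
  fix d \<psi> assume "\<psi> \<in> cspan S"
  then obtain F c where F: "finite F" "F \<subseteq> S" "\<psi> = (\<lambda>x. \<Sum>f\<in>F. c f * f x)" unfolding cspan_def by blast
  then have "(\<lambda>x. d * \<psi> x) = (\<lambda>x. \<Sum>f\<in>F. (d * c f) * f x)" by (simp add: sum_distrib_left mult.assoc)
  then show "(\<lambda>x. d * \<psi> x) \<in> cspan S" unfolding cspan_def using F
    by (intro CollectI exI[of _ F] exI[of _ "\<lambda>f. d * c f"]) simp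
qed

lemma cspan_induct_sub:
  assumes "\<psi> \<in> cspan S" "csubspace V" "\<And>f. f \<in> S \<Longrightarrow> f \<in> V"
  shows "\<psi> \<in> V"
  using cspan_least[of V S] assms by auto

lemma Gsubspace_inter: "Gsubspace n V \<Longrightarrow> Gsubspace n W \<Longrightarrow> Gsubspace n (V \<inter> W)"
proof -
  assume A: "Gsubspace n V" "Gsubspace n W"
  have "csubspace V" "csubspace W" using A unfolding Gsubspace_def by auto
  then have "csubspace (V \<inter> W)" unfolding csubspace_def by simp
  then show ?thesis using A unfolding Gsubspace_def by auto
qed

lemma act_apply: "act g \<psi> x = \<psi> (inv g ` x)"
  by (simp add: act_def)

lemma act_add: "act g (\<lambda>x. \<phi> x + \<psi> x) = (\<lambda>x. act g \<phi> x + act g \<psi> x)"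
  by (simp add: act_def)

lemma act_scale: "act g (\<lambda>x. c * \<psi> x) = (\<lambda>x. c * act g \<psi> x)"
  by (simp add: act_def)

lemma act_sum: "act g (\<lambda>x. \<Sum>f\<in>F. h f x) = (\<lambda>x. \<Sum>f\<in>F. act g (h f) x)"
  by (simp add: act_def)

lemma act_zero: "act g (\<lambda>_. 0) = (\<lambda>_. 0)"
  by (simp add: act_def)

lemma in2_self: "inner_L2 n \<psi> \<psi> = of_real (\<Sum>x\<in>Pow {..<n}. (cmod (\<psi> x))\<^sup>2)"
  unfolding inner_L2_def of_real_sum complex_norm_square ..

lemma in2_self_re: "(\<Sum>x\<in>Pow {..<n}. (cmod (\<psi> x))\<^sup>2) = Re (inner_L2 n \<psi> \<psi>)"
  unfolding inner_L2_def Re_sum complex_norm_square[symmetric] Re_complex_of_real ..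

lemma in2_self_eq0:
  assumes "\<psi> \<in> L2X n" "inner_L2 n \<psi> \<psi> = 0"
  shows "\<psi> = (\<lambda>_. 0)"
proof
  fix x
  have "(\<Sum>x\<in>Pow {..<n}. (cmod (\<psi> x))\<^sup>2) = 0" unfolding in2_self_re assms(2) by simp
  then have "\<forall>x\<in>Pow {..<n}. (cmod (\<psi> x))\<^sup>2 = 0" by (subst (asm) sum_nonneg_eq_0_iff) auto
  then show "\<psi> x = 0" using assms(1) unfolding L2X_def by (cases "x \<subseteq> {..<n}") auto
qed

lemma in2_sum_left: "inner_L2 n (\<lambda>x. \<Sum>f\<in>F. c f * h f x) \<phi> = (\<Sum>f\<in>F. c f * inner_L2 n (h f) \<phi>)"
  unfolding inner_L2_def by (simp add: sum_distrib_left sum_distrib_right mult.assoc sum.swap[of _ F])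

lemma in2_sum_right: "inner_L2 n \<phi> (\<lambda>x. \<Sum>f\<in>F. c f * h f x) = (\<Sum>f\<in>F. cnj (c f) * inner_L2 n \<phi> (h f))"
  unfolding inner_L2_def by (simp add: sum_distrib_left sum_distrib_right algebra_simps sum.swap[of _ F])

lemma in2_lin_left: "inner_L2 n (\<lambda>x. c * \<phi> x + d * \<psi> x) \<theta> = c * inner_L2 n \<phi> \<theta> + d * inner_L2 n \<psi> \<theta>"
  unfolding inner_L2_def by (simp add: sum.distrib sum_distrib_left algebra_simps)

lemma in2_lin_right: "inner_L2 n \<theta> (\<lambda>x. c * \<phi> x + d * \<psi> x) = cnj c * inner_L2 n \<theta> \<phi> + cnj d * inner_L2 n \<theta> \<psi>"
  unfolding inner_L2_def by (simp add: sum.distrib sum_distrib_left algebra_simps)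

lemma in2_herm: "cnj (inner_L2 n \<phi> \<psi>) = inner_L2 n \<psi> \<phi>"
  unfolding inner_L2_def by (simp add: mult.commute)

lemma in2_cspan_zero:
  assumes "\<psi> \<in> cspan S" "\<And>f. f \<in> S \<Longrightarrow> inner_L2 n \<phi> f = 0"
  shows "inner_L2 n \<phi> \<psi> = 0"
proof -
  obtain F c where F: "finite F" "F \<subseteq> S" "\<psi> = (\<lambda>x. \<Sum>f\<in>F. c f * f x)" using assms(1) unfolding cspan_def by blast
  have "\<forall>f\<in>F. cnj (c f) * inner_L2 n \<phi> f = 0" using F assms(2) by auto
  then show ?thesis unfolding F(3) in2_sum_right by (simp add: sum.neutral)
qed


section \<open>Tableaux and polytabloids\<close>

definition ch :: "(nat \<Rightarrow> nat) \<Rightarrow> (nat \<Rightarrow> nat) \<Rightarrow> nat set \<Rightarrow> nat \<Rightarrow> nat" where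
  "ch a b E i = (if i \<in> E then a i else b i)"

definition SE :: "nat \<Rightarrow> (nat \<Rightarrow> nat) \<Rightarrow> (nat \<Rightarrow> nat) \<Rightarrow> nat set \<Rightarrow> nat set" where
  "SE s a b E = ch a b E ` {..<s}"

definition tab :: "nat \<Rightarrow> nat \<Rightarrow> (nat \<Rightarrow> nat) \<Rightarrow> (nat \<Rightarrow> nat) \<Rightarrow> bool" where
  "tab n s a b \<longleftrightarrow> (\<forall>i<s. a i < n \<and> b i < n) \<and> inj_on a {..<s} \<and> inj_on b {..<s}
      \<and> a ` {..<s} \<inter> b ` {..<s} = {}"

definition sd :: "nat set \<Rightarrow> nat set \<Rightarrow> nat set" where
  "sd E F = (E - F) \<union> (F - E)"

definition tau :: "nat \<Rightarrow> (nat \<Rightarrow> nat) \<Rightarrow> (nat \<Rightarrow> nat) \<Rightarrow> nat set \<Rightarrow> nat \<Rightarrow> nat" where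
  "tau s a b F z = (if \<exists>i\<in>F. z = a i then b (SOME i. i \<in> F \<and> z = a i)
      else if \<exists>i\<in>F. z = b i then a (SOME i. i \<in> F \<and> z = b i) else z)"

lemma pt_eq: "polytabloid s a b = (\<lambda>x. \<Sum>E\<in>Pow {..<s}. (-1) ^ card E * (if x = SE s a b E then 1 else 0))"
  by (simp add: polytabloid_def SE_def ch_def fun_eq_iff)

lemma sd_sd: "sd (sd E F) F = E"
  unfolding sd_def by auto

lemma sd_Pow: "E \<subseteq> I \<Longrightarrow> F \<subseteq> I \<Longrightarrow> sd E F \<subseteq> I"
  unfolding sd_def by auto

lemma sd_Pow': "E \<in> Pow I \<Longrightarrow> F \<subseteq> I \<Longrightarrow> sd E F \<in> Pow I"
  unfolding sd_def by auto

lemma card_sd: "finite E \<Longrightarrow> finite F \<Longrightarrow> card (sd E F) + 2 * card (E \<inter> F) = card E + card F"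
proof -
  assume f: "finite E" "finite F"
  have "card (sd E F) = card (E - F) + card (F - E)"
    unfolding sd_def using f by (intro card_Un_disjoint) auto
  moreover have "card (E - F) + card (E \<inter> F) = card E"
    using f by (metis Diff_Diff_Int Diff_subset card_Diff_subset card_mono Int_lower1 finite_Diff add.commute le_add_diff_inverse Int_commute inf.absorb_iff2 card_Un_disjoint Diff_disjoint Un_Diff_Int)
  moreover have "card (F - E) + card (E \<inter> F) = card F"
    using f by (metis Int_commute card_Diff_subset_Int card_mono Int_lower1 finite_Int le_add_diff_inverse2 Diff_Diff_Int Diff_subset card_Diff_subset)
  ultimately show ?thesis by simp
qed

lemma sign_sd: "finite E \<Longrightarrow> finite F \<Longrightarrow> (-1::complex) ^ card (sd E F) = (-1) ^ card E * (-1) ^ card F"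
proof -
  assume f: "finite E" "finite F"
  have "(-1::complex) ^ card (sd E F) = (-1) ^ (card (sd E F) + 2 * card (E \<inter> F))"
    by (simp add: power_add power_mult)
  also have "\<dots> = (-1) ^ (card E + card F)" using card_sd[OF f] by simp
  finally show ?thesis by (simp add: power_add)
qed

lemma sum_sd_reindex:
  assumes "finite I" "F \<subseteq> I"
  shows "(\<Sum>E\<in>Pow I. (-1) ^ card E * G (sd E F)) = (-1) ^ card F * (\<Sum>E\<in>Pow I. (-1) ^ card E * (G E :: complex))"
proof -
  have fF: "finite F" using assms finite_subset by blast
  have "(\<Sum>E\<in>Pow I. (-1) ^ card E * G (sd E F)) = (\<Sum>E\<in>Pow I. (-1) ^ card (sd E F) * G E)"
    apply (rule sum.reindex_bij_witness[where i="\<lambda>E. sd E F" and j="\<lambda>E. sd E F"])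
    subgoal by (simp add: sd_sd)
    subgoal using assms by (auto simp: sd_def)
    subgoal by (simp add: sd_sd)
    subgoal using assms by (auto simp: sd_def)
    subgoal by (simp add: sd_sd)
    done
  also have "\<dots> = (\<Sum>E\<in>Pow I. (-1) ^ card F * ((-1) ^ card E * G E))"
  proof (rule sum.cong)
    fix E assume "E \<in> Pow I"
    then have "finite E" using assms finite_subset by blast
    then show "(-1) ^ card (sd E F) * G E = (-1) ^ card F * ((-1) ^ card E * G E)"
      using sign_sd[of E F] fF by simp
  qed simp
  finally show ?thesis by (simp add: sum_distrib_left)
qed

lemma image_inv_eq_iff: "bij g \<Longrightarrow> (inv g ` x = Y) \<longleftrightarrow> (x = g ` Y)"
  by (metis bij_def image_f_inv_f image_inv_f_f surj_imp_inj_inv inj_imp_surj_inv bij_image_Collect_eq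
      image_inv_into_cancel subset_UNIV)

lemma act_pt: "bij g \<Longrightarrow> act g (polytabloid s a b) = polytabloid s (g \<circ> a) (g \<circ> b)"
proof -
  assume g: "bij g"
  have "SE s (g \<circ> a) (g \<circ> b) E = g ` SE s a b E" for E
    unfolding SE_def ch_def image_image by (rule image_cong) auto
  then show ?thesis
    unfolding pt_eq act_def using image_inv_eq_iff[OF g] by simp
qed

lemma pt_cong: "(\<And>i. i < s \<Longrightarrow> a' i = a i \<and> b' i = b i) \<Longrightarrow> polytabloid s a' b' = polytabloid s a b"
  unfolding polytabloid_def by (intro ext sum.cong refl) (auto intro!: image_cong)

context
  fixes n s :: nat and a b :: "nat \<Rightarrow> nat"
  assumes T: "tab n s a b"
begin

lemma T_lt: "i < s \<Longrightarrow> a i < n" "i < s \<Longrightarrow> b i < n"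
  using T unfolding tab_def by auto

lemma T_inj: "i < s \<Longrightarrow> j < s \<Longrightarrow> a i = a j \<longleftrightarrow> i = j" "i < s \<Longrightarrow> j < s \<Longrightarrow> b i = b j \<longleftrightarrow> i = j"
  using T unfolding tab_def inj_on_def by auto

lemma T_disj: "i < s \<Longrightarrow> j < s \<Longrightarrow> a i \<noteq> b j"
  using T unfolding tab_def by auto

lemma tau_a: "F \<subseteq> {..<s} \<Longrightarrow> i < s \<Longrightarrow> tau s a b F (a i) = (if i \<in> F then b i else a i)"
proof -
  assume F: "F \<subseteq> {..<s}" and i: "i < s"
  show ?thesis
  proof (cases "i \<in> F")
    case True
    have "(SOME j. j \<in> F \<and> a i = a j) = i"
      using True F i T_inj(1)[of i] by (intro some_equality) auto
    then show ?thesis unfolding tau_def using True by auto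
  next
    case False
    have "\<not> (\<exists>j\<in>F. a i = a j)" using False F i T_inj(1)[of i] by auto
    moreover have "\<not> (\<exists>j\<in>F. a i = b j)" using F i T_disj by blast
    ultimately show ?thesis unfolding tau_def using False by simp
  qed
qed

lemma tau_b: "F \<subseteq> {..<s} \<Longrightarrow> i < s \<Longrightarrow> tau s a b F (b i) = (if i \<in> F then a i else b i)"
proof -
  assume F: "F \<subseteq> {..<s}" and i: "i < s"
  have na: "\<not> (\<exists>j\<in>F. b i = a j)" using F i T_disj by (metis lessThan_iff subsetD)
  show ?thesis
  proof (cases "i \<in> F")
    case True
    have "(SOME j. j \<in> F \<and> b i = b j) = i"
      using True F i T_inj(2)[of i] by (intro some_equality) auto
    then show ?thesis unfolding tau_def using True na by auto
  next
    case False
    have "\<not> (\<exists>j\<in>F. b i = b j)" using False F i T_inj(2)[of i] by auto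
    then show ?thesis unfolding tau_def using False na by simp
  qed
qed

lemma tau_other: "F \<subseteq> {..<s} \<Longrightarrow> z \<notin> a ` {..<s} \<Longrightarrow> z \<notin> b ` {..<s} \<Longrightarrow> tau s a b F z = z"
  unfolding tau_def by auto

lemma tau_cases:
  obtains i where "i < s" "z = a i" | i where "i < s" "z = b i" | "z \<notin> a ` {..<s}" "z \<notin> b ` {..<s}"
  by auto

lemma tau_invol: "F \<subseteq> {..<s} \<Longrightarrow> tau s a b F (tau s a b F z) = z"
  by (cases z rule: tau_cases) (auto simp: tau_a tau_b tau_other)

lemma tau_range: "F \<subseteq> {..<s} \<Longrightarrow> z < n \<Longrightarrow> tau s a b F z < n"
  by (cases z rule: tau_cases) (auto simp: tau_a tau_b tau_other T_lt)

lemma tau_outside: "F \<subseteq> {..<s} \<Longrightarrow> z \<notin> {..<n} \<Longrightarrow> tau s a b F z = z"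
  by (rule tau_other) (use T_lt in auto)

lemma tau_permutes: "F \<subseteq> {..<s} \<Longrightarrow> tau s a b F permutes {..<n}"
  by (rule bij_imp_permutes, rule bij_betw_byWitness[where f'="tau s a b F"])
     (auto simp: tau_invol tau_range tau_outside)

lemma tau_comp_id: "F \<subseteq> {..<s} \<Longrightarrow> tau s a b F \<circ> tau s a b F = id"
  by (auto simp: tau_invol)

lemma inv_tau: "F \<subseteq> {..<s} \<Longrightarrow> inv (tau s a b F) = tau s a b F"
  by (rule inv_unique_comp) (auto simp: tau_comp_id)

lemma tau_ch: "E \<subseteq> {..<s} \<Longrightarrow> F \<subseteq> {..<s} \<Longrightarrow> i < s \<Longrightarrow> tau s a b F (ch a b E i) = ch a b (sd E F) i"
  unfolding ch_def sd_def by (auto simp: tau_a tau_b)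

lemma tau_SE: "E \<subseteq> {..<s} \<Longrightarrow> F \<subseteq> {..<s} \<Longrightarrow> tau s a b F ` SE s a b E = SE s a b (sd E F)"
  unfolding SE_def image_image by (rule image_cong) (auto simp: tau_ch)

lemma ch_inj: "inj_on (ch a b E) {..<s}"
  unfolding inj_on_def ch_def using T_inj T_disj by (auto split: if_splits) (metis)+

lemma SE_card: "card (SE s a b E) = s"
  unfolding SE_def using card_image[OF ch_inj] by simp

lemma SE_sub: "SE s a b E \<subseteq> {..<n}"
  unfolding SE_def ch_def using T_lt by auto

lemma SE_inj: "E \<subseteq> {..<s} \<Longrightarrow> F \<subseteq> {..<s} \<Longrightarrow> SE s a b E = SE s a b F \<Longrightarrow> E = F"
proof -
  assume E: "E \<subseteq> {..<s}" and F: "F \<subseteq> {..<s}" and eq: "SE s a b E = SE s a b F"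
  have *: "E \<subseteq> F" if E: "E \<subseteq> {..<s}" and F: "F \<subseteq> {..<s}" and eq: "SE s a b E = SE s a b F" for E F
  proof
    fix i assume "i \<in> E"
    then have i: "i < s" using E by auto
    have "a i \<in> SE s a b E" unfolding SE_def ch_def using \<open>i \<in> E\<close> i by force
    then obtain j where j: "j < s" "a i = ch a b F j" using eq unfolding SE_def by auto
    show "i \<in> F"
    proof (cases "j \<in> F")
      case True
      then show ?thesis using j i T_inj(1) unfolding ch_def by auto
    next
      case False
      then show ?thesis using j i T_disj unfolding ch_def by auto
    qed
  qed
  show ?thesis using *[OF E F eq] *[OF F E eq[symmetric]] by auto
qed

lemma pt_at_SE: "F \<subseteq> {..<s} \<Longrightarrow> polytabloid s a b (SE s a b F) = (-1) ^ card F"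
proof -
  assume F: "F \<subseteq> {..<s}"
  have "polytabloid s a b (SE s a b F) = (\<Sum>E\<in>Pow {..<s}. (if E = F then (-1) ^ card E else 0))"
    unfolding pt_eq by (rule sum.cong) (use SE_inj F in auto)
  also have "\<dots> = (-1) ^ card F" using F by (simp add: sum.delta)
  finally show ?thesis .
qed

lemma pt_not_SE: "(\<And>F. F \<subseteq> {..<s} \<Longrightarrow> x \<noteq> SE s a b F) \<Longrightarrow> polytabloid s a b x = 0"
  unfolding pt_eq by (intro sum.neutral) auto

lemma pt_L2: "polytabloid s a b \<in> L2 n s"
  unfolding L2_def
proof (intro CollectI allI impI)
  fix x assume "polytabloid s a b x \<noteq> 0"
  then obtain F where "F \<subseteq> {..<s}" "x = SE s a b F" using pt_not_SE by blast
  then show "x \<subseteq> {..<n} \<and> card x = s" using SE_sub SE_card by auto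
qed

lemma pt_L2X: "polytabloid s a b \<in> L2X n"
  using pt_L2 unfolding L2_def L2X_def by auto

lemma pt_SE0: "polytabloid s a b (SE s a b {}) = 1"
  using pt_at_SE[of "{}"] by simp

lemma pt_nonzero: "polytabloid s a b \<noteq> (\<lambda>_. 0)"
  using pt_SE0 by (metis zero_neq_one)

lemma pt_real: "cnj (polytabloid s a b x) = polytabloid s a b x"
  unfolding pt_eq cnj_sum by (intro sum.cong) auto

lemma tab_perm: "g permutes {..<n} \<Longrightarrow> tab n s (g \<circ> a) (g \<circ> b)"
proof -
  assume g: "g permutes {..<n}"
  have inj: "inj g" using g by (rule permutes_inj)
  show ?thesis unfolding tab_def
  proof (intro conjI allI impI)
    fix i assume "i < s"
    then show "(g \<circ> a) i < n" "(g \<circ> b) i < n" using T_lt g permutes_in_image[OF g] by auto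
  next
    show "inj_on (g \<circ> a) {..<s}" "inj_on (g \<circ> b) {..<s}"
      using T inj unfolding tab_def by (auto intro: comp_inj_on inj_on_subset)
  next
    show "(g \<circ> a) ` {..<s} \<inter> (g \<circ> b) ` {..<s} = {}"
      using T unfolding tab_def by (auto simp: inj_eq[OF inj])
  qed
qed

lemma act_tau_pt: "F \<subseteq> {..<s} \<Longrightarrow> act (tau s a b F) (polytabloid s a b) = (\<lambda>x. (-1) ^ card F * polytabloid s a b x)"
proof
  fix x assume F: "F \<subseteq> {..<s}"
  have eq: "(tau s a b F ` x = SE s a b E) \<longleftrightarrow> (x = SE s a b (sd E F))" if "E \<subseteq> {..<s}" for E
    using image_inv_eq_iff[OF permutes_bij[OF tau_permutes[OF F]], of x] tau_SE[OF that F]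
    unfolding inv_tau[OF F] by simp
  have "act (tau s a b F) (polytabloid s a b) x = (\<Sum>E\<in>Pow {..<s}. (-1) ^ card E * (if x = SE s a b (sd E F) then 1 else 0))"
    unfolding act_def inv_tau[OF F] pt_eq by (intro sum.cong refl) (simp add: eq)
  also have "\<dots> = (-1) ^ card F * polytabloid s a b x"
    unfolding pt_eq by (rule sum_sd_reindex[where G="\<lambda>E. if x = SE s a b E then 1 else 0"]) (use F in auto)
  finally show "act (tau s a b F) (polytabloid s a b) x = (-1) ^ card F * polytabloid s a b x" .
qed

lemma act_fix_pt: "\<pi> permutes {..<n} \<Longrightarrow> (\<And>i. i < s \<Longrightarrow> \<pi> (a i) = a i \<and> \<pi> (b i) = b i) \<Longrightarrow>
    act \<pi> (polytabloid s a b) = polytabloid s a b"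
proof -
  assume p: "\<pi> permutes {..<n}" and fx: "\<And>i. i < s \<Longrightarrow> \<pi> (a i) = a i \<and> \<pi> (b i) = b i"
  have "act \<pi> (polytabloid s a b) = polytabloid s (\<pi> \<circ> a) (\<pi> \<circ> b)"
    by (rule act_pt[OF permutes_bij[OF p]])
  also have "\<dots> = polytabloid s a b" by (rule pt_cong) (use fx in simp)
  finally show ?thesis .
qed

end


lemma perm_extend:
  assumes S: "finite S" and D: "D \<subseteq> S" and inj: "inj_on h D" and hD: "h ` D \<subseteq> S"
  shows "\<exists>g. g permutes S \<and> (\<forall>x\<in>D. g x = h x)"
proof -
  have fD: "finite D" using S D finite_subset by blast
  have "card (S - D) = card (S - h ` D)"
    using card_image[OF inj] S D hD fD by (simp add: card_Diff_subset)
  then obtain k where k: "bij_betw k (S - D) (S - h ` D)"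
    using finite_same_card_bij[of "S - D" "S - h ` D"] S by auto
  define g where "g x = (if x \<in> D then h x else if x \<in> S then k x else x)" for x
  have "bij_betw g S S"
  proof -
    have "bij_betw g D (h ` D)" unfolding g_def using inj
      by (simp add: bij_betw_def inj_on_def)
    moreover have "bij_betw g (S - D) (S - h ` D)" unfolding g_def
      using k by (rule bij_betw_cong[THEN iffD1, rotated]) auto
    ultimately have "bij_betw g (D \<union> (S - D)) (h ` D \<union> (S - h ` D))"
      by (rule bij_betw_combine) blast
    moreover have "D \<union> (S - D) = S" "h ` D \<union> (S - h ` D) = S" using D hD by auto
    ultimately show ?thesis by simp
  qed
  moreover have "x \<notin> S \<Longrightarrow> g x = x" for x unfolding g_def using D by auto
  ultimately have "g permutes S" by (rule bij_imp_permutes)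
  then show ?thesis unfolding g_def by auto
qed

lemma tab_trans:
  assumes T: "tab n s a b" and T': "tab n s a' b'"
  shows "\<exists>g. g permutes {..<n} \<and> (\<forall>i<s. g (a i) = a' i \<and> g (b i) = b' i)"
proof -
  define D where "D = a ` {..<s} \<union> b ` {..<s}"
  define h where "h z = (if z \<in> a ` {..<s} then a' (the_inv_into {..<s} a z) else b' (the_inv_into {..<s} b z))" for z
  have ia: "inj_on a {..<s}" "inj_on b {..<s}" "inj_on a' {..<s}" "inj_on b' {..<s}"
    using T T' unfolding tab_def by auto
  have ha: "h (a i) = a' i" if "i < s" for i
    unfolding h_def using that the_inv_into_f_f[OF ia(1)] by auto
  have hb: "h (b i) = b' i" if "i < s" for i
  proof -
    have "b i \<notin> a ` {..<s}" using T_disj[OF T] that by (metis imageE lessThan_iff)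
    then show ?thesis unfolding h_def using that the_inv_into_f_f[OF ia(2)] by auto
  qed
  have "inj_on h D"
  proof (rule inj_onI)
    fix x y assume "x \<in> D" "y \<in> D" "h x = h y"
    then show "x = y" unfolding D_def using ha hb T_inj[OF T] T_inj[OF T'] T_disj[OF T'] by (auto) (metis)+
  qed
  moreover have "D \<subseteq> {..<n}" unfolding D_def using T_lt[OF T] by auto
  moreover have "h ` D \<subseteq> {..<n}" unfolding D_def using T_lt[OF T'] ha hb by auto
  ultimately obtain g where g: "g permutes {..<n}" "\<forall>x\<in>D. g x = h x"
    using perm_extend[of "{..<n}" D h] by auto
  then show ?thesis using ha hb unfolding D_def by auto
qed

lemma tab_exists: "2 * s \<le> n \<Longrightarrow> tab n s (\<lambda>i. i) (\<lambda>i. s + i)"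
  unfolding tab_def inj_on_def by auto

section \<open>The Specht module\<close>

lemma csubspace_L2: "csubspace (L2 n r)"
  unfolding csubspace_def
proof (intro conjI ballI allI)
  show "(\<lambda>_. 0) \<in> L2 n r" unfolding L2_def by simp
next
  fix \<phi> \<psi> assume A: "\<phi> \<in> L2 n r" "\<psi> \<in> L2 n r"
  show "(\<lambda>x. \<phi> x + \<psi> x) \<in> L2 n r" unfolding L2_def
  proof (intro CollectI allI impI)
    fix x assume "\<phi> x + \<psi> x \<noteq> 0"
    then have "\<phi> x \<noteq> 0 \<or> \<psi> x \<noteq> 0" by auto
    then show "x \<subseteq> {..<n} \<and> card x = r" using A unfolding L2_def by blast
  qed
next
  fix c \<psi> assume A: "\<psi> \<in> L2 n r"
  show "(\<lambda>x. c * \<psi> x) \<in> L2 n r" unfolding L2_def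
  proof (intro CollectI allI impI)
    fix x assume "c * \<psi> x \<noteq> 0"
    then have "\<psi> x \<noteq> 0" by auto
    then show "x \<subseteq> {..<n} \<and> card x = r" using A unfolding L2_def by blast
  qed
qed

lemma L2_sub_L2X: "L2 n r \<subseteq> L2X n"
  unfolding L2_def L2X_def by auto

definition gens :: "nat \<Rightarrow> nat \<Rightarrow> (nat set \<Rightarrow> complex) set" where
  "gens n s = {polytabloid s a b | a b. tab n s a b}"

lemma Specht_gens: "Specht n s = cspan (gens n s)"
  unfolding Specht_def gens_def tab_def ..

lemma gens_L2: "gens n s \<subseteq> L2 n s"
  unfolding gens_def using pt_L2 by blast

lemma Specht_L2: "Specht n s \<subseteq> L2 n s"
  unfolding Specht_gens by (rule cspan_least[OF csubspace_L2 gens_L2])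

lemma Specht_L2X: "Specht n s \<subseteq> L2X n"
  using Specht_L2 L2_sub_L2X by blast

lemma csubspace_Specht: "csubspace (Specht n s)"
  unfolding Specht_gens by (rule cspan_csubspace)

lemma gens_Specht: "gens n s \<subseteq> Specht n s"
  unfolding Specht_gens by (rule cspan_sub)

lemma pt_Specht: "tab n s a b \<Longrightarrow> polytabloid s a b \<in> Specht n s"
  using gens_Specht unfolding gens_def by blast

lemma csubspace_preimage_act:
  "csubspace V \<Longrightarrow> csubspace {\<phi>. act g \<phi> \<in> V}"
  unfolding csubspace_def by (simp add: act_add act_scale act_zero)

lemma Specht_inv: "g permutes {..<n} \<Longrightarrow> \<psi> \<in> Specht n s \<Longrightarrow> act g \<psi> \<in> Specht n s"
proof -
  assume g: "g permutes {..<n}" and p: "\<psi> \<in> Specht n s"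
  have "gens n s \<subseteq> {\<phi>. act g \<phi> \<in> Specht n s}"
  proof
    fix f assume "f \<in> gens n s"
    then obtain a b where f: "f = polytabloid s a b" "tab n s a b" unfolding gens_def by blast
    have "act g f = polytabloid s (g \<circ> a) (g \<circ> b)" unfolding f(1) by (rule act_pt[OF permutes_bij[OF g]])
    then show "f \<in> {\<phi>. act g \<phi> \<in> Specht n s}" using pt_Specht[OF tab_perm[OF f(2) g]] by simp
  qed
  then have "Specht n s \<subseteq> {\<phi>. act g \<phi> \<in> Specht n s}"
    unfolding Specht_gens[of n s] by (intro cspan_least csubspace_preimage_act cspan_csubspace)
      (simp add: Specht_gens)
  then show ?thesis using p by blast
qed

lemma Gsubspace_Specht: "Gsubspace n (Specht n s)"
  unfolding Gsubspace_def using Specht_L2X csubspace_Specht Specht_inv by blast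

definition kap :: "nat \<Rightarrow> (nat \<Rightarrow> nat) \<Rightarrow> (nat \<Rightarrow> nat) \<Rightarrow> (nat set \<Rightarrow> complex) \<Rightarrow> (nat set \<Rightarrow> complex)" where
  "kap s a b w = (\<lambda>x. \<Sum>E\<in>Pow {..<s}. (-1) ^ card E * act (tau s a b E) w x)"

lemma col_cases:
  obtains (A) j where "j < s" "z = a j" | (B) j where "j < s" "z = b j"
    | (C) "z \<notin> a ` {..<s}" "z \<notin> b ` {..<s}"
  by auto

lemma sd_comm: "sd E F = sd F E"
  unfolding sd_def by auto

context
  fixes n s :: nat and a b :: "nat \<Rightarrow> nat"
  assumes T: "tab n s a b"
begin

lemma inner_pt: "inner_L2 n w (polytabloid s a b) = (\<Sum>E\<in>Pow {..<s}. (-1) ^ card E * w (SE s a b E))"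
proof -
  have "inner_L2 n w (polytabloid s a b) = (\<Sum>x\<in>Pow {..<n}. \<Sum>E\<in>Pow {..<s}. (-1) ^ card E * (if x = SE s a b E then w x else 0))"
    unfolding inner_L2_def pt_real[OF T] unfolding pt_eq
    by (simp add: sum_distrib_left algebra_simps if_distrib cong: if_cong)
  also have "\<dots> = (\<Sum>E\<in>Pow {..<s}. \<Sum>x\<in>Pow {..<n}. (-1) ^ card E * (if x = SE s a b E then w x else 0))"
    by (rule sum.swap)
  also have "\<dots> = (\<Sum>E\<in>Pow {..<s}. (-1) ^ card E * w (SE s a b E))"
  proof (rule sum.cong[OF refl])
    fix E
    show "(\<Sum>x\<in>Pow {..<n}. (-1) ^ card E * (if x = SE s a b E then w x else 0)) = (-1) ^ card E * w (SE s a b E)"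
      by (simp add: sum_distrib_left[symmetric] sum.delta SE_sub[OF T])
  qed
  finally show ?thesis .
qed

lemma tau_sd_single: "E \<subseteq> {..<s} \<Longrightarrow> i < s \<Longrightarrow> tau s a b (sd E {i}) z = tau s a b E (tau s a b {i} z)"
proof -
  assume E: "E \<subseteq> {..<s}" and i: "i < s"
  have sE: "sd E {i} \<subseteq> {..<s}" using E i unfolding sd_def by auto
  have si: "{i} \<subseteq> {..<s}" using i by auto
  show ?thesis
  proof (cases rule: col_cases[where z=z and s=s and a=a and b=b])
    case (A j)
    then show ?thesis using tau_a[OF T sE] tau_a[OF T si] tau_a[OF T E] tau_b[OF T E] unfolding sd_def by auto
  next
    case (B j)
    then show ?thesis using tau_b[OF T sE] tau_b[OF T si] tau_a[OF T E] tau_b[OF T E] unfolding sd_def by auto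
  next
    case C
    then show ?thesis using tau_other[OF T sE] tau_other[OF T si] tau_other[OF T E] by auto
  qed
qed

lemma tau_single_fix:
  assumes i: "i < s" and x: "a i \<in> x \<longleftrightarrow> b i \<in> x"
  shows "tau s a b {i} ` x = x"
proof -
  have si: "{i} \<subseteq> {..<s}" using i by auto
  have mem: "tau s a b {i} z \<in> x \<longleftrightarrow> z \<in> x" for z
  proof (cases rule: col_cases[where z=z and s=s and a=a and b=b])
    case (A j)
    then show ?thesis using tau_a[OF T si] x by (cases "j = i") auto
  next
    case (B j)
    then show ?thesis using tau_b[OF T si] x by (cases "j = i") auto
  next
    case C
    then show ?thesis using tau_other[OF T si] by auto
  qed
  show ?thesis
  proof
    show "tau s a b {i} ` x \<subseteq> x" using mem by auto
    show "x \<subseteq> tau s a b {i} ` x"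
    proof
      fix z assume "z \<in> x"
      then have "tau s a b {i} z \<in> x" using mem by simp
      moreover have "tau s a b {i} (tau s a b {i} z) = z" by (rule tau_invol[OF T si])
      ultimately show "z \<in> tau s a b {i} ` x" by (metis image_eqI)
    qed
  qed
qed

lemma not_SE_column:
  assumes x: "x \<subseteq> {..<n}" "card x = s" and nS: "\<And>F. F \<subseteq> {..<s} \<Longrightarrow> x \<noteq> SE s a b F"
  shows "\<exists>i<s. (a i \<in> x \<longleftrightarrow> b i \<in> x)"
proof (rule ccontr)
  assume "\<not> ?thesis"
  then have one: "\<And>i. i < s \<Longrightarrow> (a i \<in> x) \<noteq> (b i \<in> x)" by blast
  define F where "F = {i. i < s \<and> a i \<in> x}"
  have "SE s a b F \<subseteq> x" unfolding SE_def ch_def F_def using one by auto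
  moreover have "finite x" using x finite_subset by blast
  moreover have "card (SE s a b F) = card x" using SE_card[OF T] x by simp
  ultimately have "SE s a b F = x" using card_subset_eq[of x "SE s a b F"] by blast
  moreover have "F \<subseteq> {..<s}" unfolding F_def by auto
  ultimately show False using nS by metis
qed

lemma kap_formula:
  assumes w: "w \<in> L2 n s"
  shows "kap s a b w = (\<lambda>x. inner_L2 n w (polytabloid s a b) * polytabloid s a b x)"
proof
  fix x
  have kx: "kap s a b w x = (\<Sum>E\<in>Pow {..<s}. (-1) ^ card E * w (tau s a b E ` x))"
    unfolding kap_def act_def by (intro sum.cong refl) (simp add: inv_tau[OF T])
  show "kap s a b w x = inner_L2 n w (polytabloid s a b) * polytabloid s a b x"
  proof (cases "\<exists>F. F \<subseteq> {..<s} \<and> x = SE s a b F")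
    case True
    then obtain F where F: "F \<subseteq> {..<s}" "x = SE s a b F" by blast
    have "kap s a b w x = (\<Sum>E\<in>Pow {..<s}. (-1) ^ card E * w (tau s a b E ` x))" by (rule kx)
    also have "\<dots> = (\<Sum>E\<in>Pow {..<s}. (-1) ^ card E * w (SE s a b (sd E F)))"
      using F by (intro sum.cong refl) (simp add: tau_SE[OF T] sd_comm)
    also have "\<dots> = (-1) ^ card F * (\<Sum>E\<in>Pow {..<s}. (-1) ^ card E * w (SE s a b E))"
      by (rule sum_sd_reindex[where G="\<lambda>E. w (SE s a b E)"]) (use F in auto)
    finally show ?thesis unfolding inner_pt F(2) pt_at_SE[OF T F(1)] by (simp add: mult.commute)
  next
    case False
    then have e0: "polytabloid s a b x = 0" using pt_not_SE[OF T] by blast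
    have "kap s a b w x = 0"
    proof (cases "x \<subseteq> {..<n} \<and> card x = s")
      case False
      have "w (tau s a b E ` x) = 0" if "E \<in> Pow {..<s}" for E
      proof -
        have E: "E \<subseteq> {..<s}" using that by auto
        have p: "tau s a b E permutes {..<n}" by (rule tau_permutes[OF T E])
        have "tau s a b E ` x \<subseteq> {..<n} \<longleftrightarrow> x \<subseteq> {..<n}"
          using permutes_in_image[OF p] by auto
        moreover have "card (tau s a b E ` x) = card x"
          by (rule card_image) (rule inj_on_subset[OF permutes_inj[OF p]], simp)
        ultimately show ?thesis using w False unfolding L2_def by auto
      qed
      then show ?thesis unfolding kx by simp
    next
      case True
      then obtain i where i: "i < s" "a i \<in> x \<longleftrightarrow> b i \<in> x"
        using not_SE_column[of x] False by blast
      have si: "{i} \<subseteq> {..<s}" using i by auto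
      have "(\<Sum>E\<in>Pow {..<s}. (-1) ^ card E * w (tau s a b (sd E {i}) ` x))
          = (-1) ^ card {i} * (\<Sum>E\<in>Pow {..<s}. (-1) ^ card E * w (tau s a b E ` x))"
        by (rule sum_sd_reindex[where G="\<lambda>E. w (tau s a b E ` x)"]) (use si in auto)
      moreover have "tau s a b (sd E {i}) ` x = tau s a b E ` x" if "E \<in> Pow {..<s}" for E
      proof -
        have "tau s a b (sd E {i}) ` x = tau s a b E ` (tau s a b {i} ` x)"
          using tau_sd_single[of E i] that i by (auto simp: image_image)
        then show ?thesis using tau_single_fix[OF i] by simp
      qed
      ultimately have "kap s a b w x = - kap s a b w x" unfolding kx by simp
      then show ?thesis by simp
    qed
    then show ?thesis using e0 by simp
  qed
qed

end

lemma kap_in: "csubspace W \<Longrightarrow> (\<And>g. g permutes {..<n} \<Longrightarrow> act g w \<in> W) \<Longrightarrow> tab n s a b \<Longrightarrow> kap s a b w \<in> W"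
  unfolding kap_def
  by (intro csubspace_sum csubspace_scale) (auto intro: tau_permutes)

lemma Specht_nonzero: "2 * s \<le> n \<Longrightarrow> Specht n s \<noteq> {\<lambda>_. 0}"
  using pt_Specht[OF tab_exists] pt_nonzero[OF tab_exists] by blast

theorem Specht_irred:
  assumes s: "2 * s \<le> n"
  shows "Girreducible n (Specht n s)"
  unfolding Girreducible_def
proof (intro conjI allI impI)
  show "Gsubspace n (Specht n s)" by (rule Gsubspace_Specht)
  show "Specht n s \<noteq> {\<lambda>_. 0}" by (rule Specht_nonzero[OF s])
next
  fix W assume W: "Gsubspace n W \<and> W \<subseteq> Specht n s"
  show "W = {\<lambda>_. 0} \<or> W = Specht n s"
  proof (cases "W = {\<lambda>_. 0}")
    case False
    have cW: "csubspace W" and iW: "\<And>g \<psi>. g permutes {..<n} \<Longrightarrow> \<psi> \<in> W \<Longrightarrow> act g \<psi> \<in> W"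
      using W unfolding Gsubspace_def by auto
    have "\<exists>w\<in>W. w \<noteq> (\<lambda>_. 0)"
    proof (rule ccontr)
      assume "\<not> ?thesis"
      then have "W \<subseteq> {\<lambda>_. 0}" by blast
      then have "W = {\<lambda>_. 0}" using csubspace_zero[OF cW] by blast
      then show False using False by simp
    qed
    then obtain w where w: "w \<in> W" "w \<noteq> (\<lambda>_. 0)" by blast
    have wS: "w \<in> Specht n s" using w W by blast
    have wL: "w \<in> L2 n s" using wS Specht_L2 by blast
    have "inner_L2 n w w \<noteq> 0" using in2_self_eq0[of w n] w wS Specht_L2X by blast
    moreover have "inner_L2 n w w = 0" if "\<forall>f\<in>gens n s. inner_L2 n w f = 0"
      by (rule in2_cspan_zero[of w "gens n s" n w]) (use wS that in \<open>auto simp: Specht_gens\<close>)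
    ultimately obtain f where f: "f \<in> gens n s" "inner_L2 n w f \<noteq> 0" by blast
    then obtain a b where ab: "f = polytabloid s a b" "tab n s a b" unfolding gens_def by blast
    have "kap s a b w \<in> W" by (rule kap_in[OF cW _ ab(2)]) (use iW w in auto)
    then have "(\<lambda>x. inner_L2 n w f * polytabloid s a b x) \<in> W" using kap_formula[OF ab(2) wL] ab by simp
    then have "(\<lambda>x. inverse (inner_L2 n w f) * (inner_L2 n w f * polytabloid s a b x)) \<in> W"
      by (rule csubspace_scale[OF cW])
    moreover have "(\<lambda>x. inverse (inner_L2 n w f) * (inner_L2 n w f * polytabloid s a b x)) = polytabloid s a b"
      using f(2) by (intro ext) (simp add: mult.assoc[symmetric])
    ultimately have eW: "polytabloid s a b \<in> W" by simp
    have "gens n s \<subseteq> W"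
    proof
      fix f' assume "f' \<in> gens n s"
      then obtain a' b' where ab': "f' = polytabloid s a' b'" "tab n s a' b'" unfolding gens_def by blast
      obtain g where g: "g permutes {..<n}" "\<forall>i<s. g (a i) = a' i \<and> g (b i) = b' i"
        using tab_trans[OF ab(2) ab'(2)] by blast
      have "act g (polytabloid s a b) = polytabloid s (g \<circ> a) (g \<circ> b)" by (rule act_pt[OF permutes_bij[OF g(1)]])
      also have "\<dots> = f'" unfolding ab'(1) by (rule pt_cong) (use g in simp)
      finally show "f' \<in> W" using iW[OF g(1) eW] by simp
    qed
    then have "Specht n s \<subseteq> W" unfolding Specht_gens by (rule cspan_least[OF cW])
    then show ?thesis using W by (intro disjI2 subset_antisym) auto
  qed (rule disjI1)
qed


section \<open>The up operator\<close>

definition Up :: "nat \<Rightarrow> nat \<Rightarrow> (nat set \<Rightarrow> complex) \<Rightarrow> (nat set \<Rightarrow> complex)" where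
  "Up n r \<psi> = (\<lambda>x. if x \<subseteq> {..<n} \<and> card x = r then \<Sum>z\<in>Pow x. \<psi> z else 0)"

lemma Up_L2: "Up n r \<psi> \<in> L2 n r"
  unfolding Up_def L2_def by auto

lemma Up_add: "Up n r (\<lambda>x. \<phi> x + \<psi> x) = (\<lambda>x. Up n r \<phi> x + Up n r \<psi> x)"
  unfolding Up_def by (auto simp: sum.distrib)

lemma Up_scale: "Up n r (\<lambda>x. c * \<psi> x) = (\<lambda>x. c * Up n r \<psi> x)"
  unfolding Up_def by (auto simp: sum_distrib_left)

lemma Up_zero: "Up n r (\<lambda>_. 0) = (\<lambda>_. 0)"
  unfolding Up_def by auto

lemma Up_act:
  assumes g: "g permutes {..<n}"
  shows "act g (Up n r \<psi>) = Up n r (act g \<psi>)"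
proof
  fix x
  have ig: "inv g permutes {..<n}" using permutes_inv[OF g] .
  have c1: "inv g ` x \<subseteq> {..<n} \<longleftrightarrow> x \<subseteq> {..<n}" using permutes_in_image[OF ig] by auto
  have c2: "card (inv g ` x) = card x"
    by (rule card_image) (rule inj_on_subset[OF permutes_inj[OF ig]], simp)
  have "(\<Sum>z\<in>Pow x. \<psi> (inv g ` z)) = (\<Sum>z\<in>image (inv g) ` Pow x. \<psi> z)"
    by (rule sum.reindex[symmetric, unfolded comp_def]) (rule inj_on_image_Pow[OF inj_on_subset[OF permutes_inj[OF ig]]], simp)
  also have "image (inv g) ` Pow x = Pow (inv g ` x)" by (rule image_Pow_surj) simp
  finally show "act g (Up n r \<psi>) x = Up n r (act g \<psi>) x"
    unfolding act_def Up_def using c1 c2 by simp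
qed

definition Vc :: "nat \<Rightarrow> nat \<Rightarrow> nat \<Rightarrow> (nat set \<Rightarrow> complex) set" where
  "Vc n r s = Up n r ` Specht n s"

lemma csubspace_Vc: "csubspace (Vc n r s)"
  unfolding csubspace_def Vc_def
proof (intro conjI ballI allI)
  show "(\<lambda>_. 0) \<in> Up n r ` Specht n s"
    using image_eqI[where f="Up n r", OF Up_zero[symmetric] csubspace_zero[OF csubspace_Specht[of n s]]] .
next
  fix \<phi> \<psi> assume "\<phi> \<in> Up n r ` Specht n s" "\<psi> \<in> Up n r ` Specht n s"
  then obtain \<phi>' \<psi>' where "\<phi>' \<in> Specht n s" "\<psi>' \<in> Specht n s" "\<phi> = Up n r \<phi>'" "\<psi> = Up n r \<psi>'" by blast
  then show "(\<lambda>x. \<phi> x + \<psi> x) \<in> Up n r ` Specht n s"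
    by (simp only: Up_add[symmetric]) (rule imageI, rule csubspace_add[OF csubspace_Specht])
next
  fix c \<psi> assume "\<psi> \<in> Up n r ` Specht n s"
  then obtain \<psi>' where "\<psi>' \<in> Specht n s" "\<psi> = Up n r \<psi>'" by blast
  then show "(\<lambda>x. c * \<psi> x) \<in> Up n r ` Specht n s"
    by (simp only: Up_scale[symmetric]) (rule imageI, rule csubspace_scale[OF csubspace_Specht])
qed

lemma Vc_L2: "Vc n r s \<subseteq> L2 n r"
  unfolding Vc_def using Up_L2 by blast

lemma Vc_inv: "g permutes {..<n} \<Longrightarrow> \<psi> \<in> Vc n r s \<Longrightarrow> act g \<psi> \<in> Vc n r s"
proof -
  assume g: "g permutes {..<n}" and p: "\<psi> \<in> Vc n r s"
  then obtain \<phi> where "\<phi> \<in> Specht n s" "\<psi> = Up n r \<phi>" unfolding Vc_def by blast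
  then have "act g \<psi> = Up n r (act g \<phi>)" "act g \<phi> \<in> Specht n s" using Up_act[OF g] Specht_inv[OF g] by auto
  then show ?thesis unfolding Vc_def by blast
qed

lemma Gsubspace_Vc: "Gsubspace n (Vc n r s)"
  unfolding Gsubspace_def using Vc_L2[of n r s] L2_sub_L2X[of n r] csubspace_Vc[of n r s] Vc_inv[of _ n _ r s]
  by (intro conjI allI impI ballI) auto

definition Y0 :: "nat \<Rightarrow> nat \<Rightarrow> (nat \<Rightarrow> nat) \<Rightarrow> (nat \<Rightarrow> nat) \<Rightarrow> nat \<Rightarrow> nat set" where
  "Y0 n s a b r = (SOME Y. Y \<subseteq> {..<n} - (a ` {..<s} \<union> b ` {..<s}) \<and> card Y = r - s)"

definition x0 :: "nat \<Rightarrow> nat \<Rightarrow> (nat \<Rightarrow> nat) \<Rightarrow> (nat \<Rightarrow> nat) \<Rightarrow> nat \<Rightarrow> nat set" where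
  "x0 n s a b r = b ` {..<s} \<union> Y0 n s a b r"

context
  fixes n s r :: nat and a b :: "nat \<Rightarrow> nat"
  assumes T: "tab n s a b" and sr: "s \<le> r" and rs: "r + s \<le> n"
begin

lemma card_cols: "card (a ` {..<s} \<union> b ` {..<s}) = 2 * s"
proof -
  have "card (a ` {..<s}) = s" "card (b ` {..<s}) = s"
    using T unfolding tab_def by (auto simp: card_image)
  moreover have "a ` {..<s} \<inter> b ` {..<s} = {}" using T unfolding tab_def by auto
  ultimately show ?thesis by (simp add: card_Un_disjoint)
qed

lemma cols_sub: "a ` {..<s} \<union> b ` {..<s} \<subseteq> {..<n}"
  using T_lt[OF T] by auto

lemma card_Z: "card ({..<n} - (a ` {..<s} \<union> b ` {..<s})) = n - 2 * s"
  using card_cols cols_sub by (simp add: card_Diff_subset)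

lemma Y0_props: "Y0 n s a b r \<subseteq> {..<n} - (a ` {..<s} \<union> b ` {..<s})" "card (Y0 n s a b r) = r - s"
proof -
  have "r - s \<le> card ({..<n} - (a ` {..<s} \<union> b ` {..<s}))" using card_Z sr rs by simp
  then obtain Y where "Y \<subseteq> {..<n} - (a ` {..<s} \<union> b ` {..<s})" "card Y = r - s"
    by (meson obtain_subset_with_card_n)
  then have "\<exists>Y. Y \<subseteq> {..<n} - (a ` {..<s} \<union> b ` {..<s}) \<and> card Y = r - s" by blast
  from someI_ex[OF this] show "Y0 n s a b r \<subseteq> {..<n} - (a ` {..<s} \<union> b ` {..<s})" "card (Y0 n s a b r) = r - s"
    unfolding Y0_def by auto
qed

lemma x0_sub: "x0 n s a b r \<subseteq> {..<n}"
  unfolding x0_def using Y0_props cols_sub by auto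

lemma x0_card: "card (x0 n s a b r) = r"
proof -
  have "card (b ` {..<s}) = s" using T unfolding tab_def by (auto simp: card_image)
  moreover have "finite (Y0 n s a b r)" using Y0_props(1) finite_subset by blast
  moreover have "b ` {..<s} \<inter> Y0 n s a b r = {}" using Y0_props(1) by auto
  ultimately show ?thesis unfolding x0_def using Y0_props(2) sr by (simp add: card_Un_disjoint)
qed

lemma x0_a: "i < s \<Longrightarrow> a i \<notin> x0 n s a b r"
  unfolding x0_def using Y0_props(1) T_disj[OF T] by auto

lemma Up_pt: "Up n r (polytabloid s a b) x = (if x \<subseteq> {..<n} \<and> card x = r
    then \<Sum>E\<in>Pow {..<s}. (-1) ^ card E * (if SE s a b E \<subseteq> x then 1 else 0) else 0)"
proof (cases "x \<subseteq> {..<n} \<and> card x = r")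
  case True
  have "(\<Sum>z\<in>Pow x. polytabloid s a b z) = (\<Sum>E\<in>Pow {..<s}. \<Sum>z\<in>Pow x. (-1) ^ card E * (if z = SE s a b E then 1 else 0))"
    unfolding pt_eq by (rule sum.swap)
  also have "\<dots> = (\<Sum>E\<in>Pow {..<s}. (-1) ^ card E * (if SE s a b E \<subseteq> x then 1 else 0))"
  proof (rule sum.cong[OF refl])
    fix E
    have fx: "finite x" using True finite_subset by blast
    show "(\<Sum>z\<in>Pow x. (-1) ^ card E * (if z = SE s a b E then 1 else 0)) = (-1) ^ card E * (if SE s a b E \<subseteq> x then 1 else (0::complex))"
      using fx by (simp add: sum_distrib_left[symmetric] sum.delta)
  qed
  finally show ?thesis unfolding Up_def using True by simp
next
  case False
  then have "Up n r (polytabloid s a b) x = 0" unfolding Up_def by auto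
  then show ?thesis using False by auto
qed

lemma Up_pt_x0: "Up n r (polytabloid s a b) (x0 n s a b r) = 1"
proof -
  have "(\<Sum>E\<in>Pow {..<s}. (-1) ^ card E * (if SE s a b E \<subseteq> x0 n s a b r then 1 else (0::complex)))
      = (\<Sum>E\<in>Pow {..<s}. (if E = {} then 1 else 0))"
  proof (rule sum.cong[OF refl])
    fix E assume E: "E \<in> Pow {..<s}"
    show "(-1) ^ card E * (if SE s a b E \<subseteq> x0 n s a b r then 1 else (0::complex)) = (if E = {} then 1 else 0)"
    proof (cases "E = {}")
      case True
      have "SE s a b {} \<subseteq> x0 n s a b r" unfolding SE_def ch_def x0_def by auto
      then show ?thesis using True by simp
    next
      case False
      then obtain i where i: "i \<in> E" by blast
      then have "a i \<in> SE s a b E" "i < s" using E unfolding SE_def ch_def by force+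
      then have "\<not> SE s a b E \<subseteq> x0 n s a b r" using x0_a by blast
      then show ?thesis using False by simp
    qed
  qed
  then show ?thesis unfolding Up_pt using x0_sub x0_card by simp
qed

lemma Up_pt_nonzero: "Up n r (polytabloid s a b) \<noteq> (\<lambda>_. 0)"
  using Up_pt_x0 by (metis zero_neq_one)

lemma fix_lemma:
  assumes hL: "h \<in> L2 n r"
    and hT: "\<And>F. F \<subseteq> {..<s} \<Longrightarrow> act (tau s a b F) h = (\<lambda>x. (-1) ^ card F * h x)"
    and hP: "\<And>\<pi>. \<pi> permutes {..<n} \<Longrightarrow> (\<forall>i<s. \<pi> (a i) = a i \<and> \<pi> (b i) = b i) \<Longrightarrow> act \<pi> h = h"
    and h0: "h (x0 n s a b r) = 0"
  shows "h = (\<lambda>_. 0)"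
proof
  fix x
  show "h x = 0"
  proof (cases "x \<subseteq> {..<n} \<and> card x = r")
    case False
    then show ?thesis using hL unfolding L2_def by auto
  next
    case xr: True
    show ?thesis
    proof (cases "\<exists>i<s. (a i \<in> x \<longleftrightarrow> b i \<in> x)")
      case True
      then obtain i where i: "i < s" "a i \<in> x \<longleftrightarrow> b i \<in> x" by blast
      have si: "{i} \<subseteq> {..<s}" using i by auto
      have "act (tau s a b {i}) h x = h x"
        unfolding act_def inv_tau[OF T si] tau_single_fix[OF T i] ..
      then have "h x = (-1) ^ card {i} * h x" using fun_cong[OF hT[OF si], of x] by simp
      then show ?thesis by simp
    next
      case False
      then have one: "\<And>i. i < s \<Longrightarrow> (a i \<in> x) \<noteq> (b i \<in> x)" by blast
      define F where "F = {i. i < s \<and> a i \<in> x}"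
      define Z where "Z = {..<n} - (a ` {..<s} \<union> b ` {..<s})"
      define Y where "Y = x \<inter> Z"
      have F: "F \<subseteq> {..<s}" unfolding F_def by auto
      have img: "tau s a b F ` x = b ` {..<s} \<union> Y"
      proof
        show "tau s a b F ` x \<subseteq> b ` {..<s} \<union> Y"
        proof
          fix y assume "y \<in> tau s a b F ` x"
          then obtain z where z: "z \<in> x" "y = tau s a b F z" by blast
          show "y \<in> b ` {..<s} \<union> Y"
          proof (cases rule: col_cases[where z=z and s=s and a=a and b=b])
            case (A j)
            then show ?thesis using z tau_a[OF T F] unfolding F_def by auto
          next
            case (B j)
            then show ?thesis using z tau_b[OF T F] one unfolding F_def by auto
          next
            case C
            then show ?thesis using z tau_other[OF T F] xr unfolding Y_def Z_def by auto
          qed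
        qed
        show "b ` {..<s} \<union> Y \<subseteq> tau s a b F ` x"
        proof
          fix y assume y: "y \<in> b ` {..<s} \<union> Y"
          show "y \<in> tau s a b F ` x"
          proof (cases "y \<in> Y")
            case True
            then have "tau s a b F y = y" using tau_other[OF T F] unfolding Y_def Z_def by auto
            then show ?thesis using True unfolding Y_def by (metis IntD1 image_eqI)
          next
            case False
            then obtain j where j: "j < s" "y = b j" using y by auto
            show ?thesis
            proof (cases "j \<in> F")
              case True
              then have "a j \<in> x" "tau s a b F (a j) = b j" using tau_a[OF T F] j unfolding F_def by auto
              then show ?thesis using j by (metis image_eqI)
            next
              case False
              then have "b j \<in> x" "tau s a b F (b j) = b j" using tau_b[OF T F] j one unfolding F_def by auto
              then show ?thesis using j by (metis image_eqI)
            qed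
          qed
        qed
      qed
      have cY: "card Y = r - s"
      proof -
        have "card (tau s a b F ` x) = r"
          using card_image[OF inj_on_subset[OF permutes_inj[OF tau_permutes[OF T F]]]] xr by simp
        moreover have "card (b ` {..<s}) = s" using T unfolding tab_def by (auto simp: card_image)
        moreover have "finite Y" unfolding Y_def Z_def by auto
        moreover have "b ` {..<s} \<inter> Y = {}" unfolding Y_def Z_def by auto
        ultimately show ?thesis unfolding img by (simp add: card_Un_disjoint)
      qed
      have YZ: "Y \<subseteq> Z" unfolding Y_def by auto
      have fZ: "finite Z" unfolding Z_def by auto
      obtain k where k: "bij_betw k (Y0 n s a b r) Y"
        using finite_same_card_bij[of "Y0 n s a b r" Y] Y0_props fZ YZ cY finite_subset unfolding Z_def
        by (metis finite_Diff finite_lessThan)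
      define D where "D = a ` {..<s} \<union> b ` {..<s} \<union> Y0 n s a b r"
      define k' where "k' z = (if z \<in> Y0 n s a b r then k z else z)" for z
      have "inj_on k' D"
      proof -
        have "inj_on k (Y0 n s a b r)" using bij_betw_imp_inj_on[OF k] .
        moreover have "k ` Y0 n s a b r \<subseteq> Z" using bij_betw_imp_surj_on[OF k] YZ by simp
        ultimately have ki: "inj_on k (Y0 n s a b r)" "\<And>z. z \<in> Y0 n s a b r \<Longrightarrow> k z \<in> Z" by auto
        show ?thesis
        proof (rule inj_onI)
          fix x y assume xy: "x \<in> D" "y \<in> D" "k' x = k' y"
          have nZ: "z \<in> D \<Longrightarrow> z \<notin> Y0 n s a b r \<Longrightarrow> z \<notin> Z" for z unfolding D_def Z_def by auto
          show "x = y"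
          proof (cases "x \<in> Y0 n s a b r"; cases "y \<in> Y0 n s a b r")
            assume "x \<in> Y0 n s a b r" "y \<in> Y0 n s a b r"
            then show ?thesis using xy ki(1) unfolding k'_def inj_on_def by auto
          next
            assume "x \<in> Y0 n s a b r" "y \<notin> Y0 n s a b r"
            then show ?thesis using xy ki(2)[of x] nZ[of y] unfolding k'_def by auto
          next
            assume "x \<notin> Y0 n s a b r" "y \<in> Y0 n s a b r"
            then show ?thesis using xy ki(2)[of y] nZ[of x] unfolding k'_def by auto
          next
            assume "x \<notin> Y0 n s a b r" "y \<notin> Y0 n s a b r"
            then show ?thesis using xy unfolding k'_def by auto
          qed
        qed
      qed
      moreover have "D \<subseteq> {..<n}" unfolding D_def using cols_sub Y0_props by auto
      moreover have "k' ` D \<subseteq> {..<n}"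
      proof -
        have "k ` Y0 n s a b r \<subseteq> {..<n}" using bij_betw_imp_surj_on[OF k] YZ unfolding Z_def by auto
        then show ?thesis unfolding D_def k'_def using cols_sub Y0_props(1) by auto
      qed
      ultimately obtain \<pi> where \<pi>: "\<pi> permutes {..<n}" "\<forall>z\<in>D. \<pi> z = k' z"
        using perm_extend[of "{..<n}" D k'] by auto
      have fixab: "\<forall>i<s. \<pi> (a i) = a i \<and> \<pi> (b i) = b i"
      proof (intro allI impI conjI)
        fix i assume i: "i < s"
        have "a i \<in> D" "b i \<in> D" "a i \<notin> Y0 n s a b r" "b i \<notin> Y0 n s a b r"
          using i Y0_props(1) unfolding D_def by auto
        then show "\<pi> (a i) = a i" "\<pi> (b i) = b i" using \<pi>(2) unfolding k'_def by auto
      qed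
      have "\<pi> ` (b ` {..<s} \<union> Y0 n s a b r) = b ` {..<s} \<union> Y"
      proof -
        have "\<pi> ` (b ` {..<s}) = b ` {..<s}" unfolding image_image using fixab by (intro image_cong) auto
        moreover have "\<pi> ` Y0 n s a b r = k ` Y0 n s a b r"
          using \<pi>(2) unfolding D_def k'_def by (intro image_cong) auto
        moreover have "k ` Y0 n s a b r = Y" using bij_betw_imp_surj_on[OF k] .
        ultimately show ?thesis by (simp add: image_Un)
      qed
      then have "inv \<pi> ` (b ` {..<s} \<union> Y) = x0 n s a b r"
        unfolding x0_def using image_inv_eq_iff[OF permutes_bij[OF \<pi>(1)]] by simp
      then have "h (b ` {..<s} \<union> Y) = 0"
        using fun_cong[OF hP[OF \<pi>(1) fixab], of "b ` {..<s} \<union> Y"] h0 unfolding act_def by simp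
      moreover have "act (tau s a b F) h x = h (b ` {..<s} \<union> Y)"
        unfolding act_def inv_tau[OF T F] img ..
      moreover have "act (tau s a b F) h x = (-1) ^ card F * h x" using fun_cong[OF hT[OF F], of x] by simp
      ultimately have "(-1) ^ card F * h x = 0" by simp
      then show ?thesis by simp
    qed
  qed
qed

end


section \<open>Identification of the isotypic component\<close>

definition a0 :: "nat \<Rightarrow> nat" where "a0 = (\<lambda>i. i)"
definition b0 :: "nat \<Rightarrow> nat \<Rightarrow> nat" where "b0 s = (\<lambda>i. s + i)"

lemma Girred_dest: "Girreducible n V \<Longrightarrow> Gsubspace n W \<Longrightarrow> W \<subseteq> V \<Longrightarrow> W = {\<lambda>_. 0} \<or> W = V"
  unfolding Girreducible_def by blast

lemma Girred_nz: "Girreducible n V \<Longrightarrow> V \<noteq> {\<lambda>_. 0}"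
  unfolding Girreducible_def by blast

lemma Girred_G: "Girreducible n V \<Longrightarrow> Gsubspace n V"
  unfolding Girreducible_def by blast

context
  fixes n s r :: nat
  assumes sr: "s \<le> r" and rs: "r + s \<le> n"
begin

lemma T0: "tab n s a0 (b0 s)"
  unfolding a0_def b0_def by (rule tab_exists) (use sr rs in simp)

lemma s2: "2 * s \<le> n" using sr rs by simp

definition "Ker = {\<psi> \<in> Specht n s. Up n r \<psi> = (\<lambda>_. 0)}"

lemma Gsubspace_Ker: "Gsubspace n Ker"
  unfolding Gsubspace_def
proof (intro conjI allI impI ballI)
  show "Ker \<subseteq> L2X n" unfolding Ker_def using Specht_L2X by blast
  show "csubspace Ker" unfolding csubspace_def Ker_def
    using csubspace_Specht[of n s] unfolding csubspace_def
    by (auto simp: Up_zero Up_add Up_scale)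
next
  fix g \<psi> assume g: "g permutes {..<n}" and p: "\<psi> \<in> Ker"
  then show "act g \<psi> \<in> Ker" unfolding Ker_def
    using Specht_inv[OF g] Up_act[OF g, of r \<psi>, symmetric] act_zero[of g] by auto
qed

lemma Ker_zero: "Ker = {\<lambda>_. 0}"
proof -
  have "Ker \<subseteq> Specht n s" unfolding Ker_def by auto
  then have "Ker = {\<lambda>_. 0} \<or> Ker = Specht n s"
    using Girred_dest[OF Specht_irred[OF s2] Gsubspace_Ker] by blast
  moreover have "polytabloid s a0 (b0 s) \<in> Specht n s" by (rule pt_Specht[OF T0])
  moreover have "polytabloid s a0 (b0 s) \<notin> Ker"
    unfolding Ker_def using Up_pt_nonzero[OF T0 sr rs] by blast
  ultimately show ?thesis by blast
qed

lemma Up_inj: "inj_on (Up n r) (Specht n s)"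
proof (rule inj_onI)
  fix \<phi> \<psi> assume A: "\<phi> \<in> Specht n s" "\<psi> \<in> Specht n s" "Up n r \<phi> = Up n r \<psi>"
  have d: "(\<lambda>x. 1 * \<phi> x + (-1) * \<psi> x) \<in> Specht n s" using csubspace_lin[OF csubspace_Specht A(1,2)] .
  have "Up n r (\<lambda>x. 1 * \<phi> x + (-1) * \<psi> x) = (\<lambda>_. 0)"
    unfolding Up_add Up_scale A(3) by simp
  then have "(\<lambda>x. 1 * \<phi> x + (-1) * \<psi> x) \<in> Ker" unfolding Ker_def using d by blast
  then have "(\<lambda>x. 1 * \<phi> x + (-1) * \<psi> x) = (\<lambda>_. 0)" using Ker_zero by blast
  then have "\<phi> x - \<psi> x = 0" for x by (metis (mono_tags) diff_conv_add_uminus mult_1 mult_minus1)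
  then show "\<phi> = \<psi>" by auto
qed

lemma Vc_nonzero: "Vc n r s \<noteq> {\<lambda>_. 0}"
proof -
  have "Up n r (polytabloid s a0 (b0 s)) \<in> Vc n r s" unfolding Vc_def using pt_Specht[OF T0] by (rule imageI)
  then show ?thesis using Up_pt_nonzero[OF T0 sr rs] by auto
qed

theorem Vc_irred: "Girreducible n (Vc n r s)"
  unfolding Girreducible_def
proof (intro conjI allI impI)
  show "Gsubspace n (Vc n r s)" by (rule Gsubspace_Vc)
  show "Vc n r s \<noteq> {\<lambda>_. 0}" by (rule Vc_nonzero)
next
  fix W assume W: "Gsubspace n W \<and> W \<subseteq> Vc n r s"
  define W' where "W' = {\<psi> \<in> Specht n s. Up n r \<psi> \<in> W}"
  have cW: "csubspace W" and iW: "\<And>g \<psi>. g permutes {..<n} \<Longrightarrow> \<psi> \<in> W \<Longrightarrow> act g \<psi> \<in> W"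
    using W unfolding Gsubspace_def by auto
  have "Gsubspace n W'"
    unfolding Gsubspace_def
  proof (intro conjI allI impI ballI)
    show "W' \<subseteq> L2X n" unfolding W'_def using Specht_L2X by blast
    show "csubspace W'" unfolding csubspace_def W'_def
      using csubspace_Specht[of n s] cW unfolding csubspace_def
      by (auto simp: Up_zero Up_add Up_scale)
  next
    fix g \<psi> assume g: "g permutes {..<n}" and p: "\<psi> \<in> W'"
    then show "act g \<psi> \<in> W'" unfolding W'_def
      using Specht_inv[OF g] Up_act[OF g, of r \<psi>, symmetric] iW[OF g] by auto
  qed
  moreover have "W' \<subseteq> Specht n s" unfolding W'_def by blast
  ultimately have "W' = {\<lambda>_. 0} \<or> W' = Specht n s"
    by (rule Girred_dest[OF Specht_irred[OF s2]])
  then show "W = {\<lambda>_. 0} \<or> W = Vc n r s"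
  proof
    assume W0: "W' = {\<lambda>_. 0}"
    have "W \<subseteq> {\<lambda>_. 0}"
    proof
      fix w assume "w \<in> W"
      then obtain \<psi> where "\<psi> \<in> Specht n s" "w = Up n r \<psi>" using W unfolding Vc_def by blast
      then have "\<psi> \<in> W'" unfolding W'_def using \<open>w \<in> W\<close> by blast
      then show "w \<in> {\<lambda>_. 0}" using W0 \<open>w = Up n r \<psi>\<close> Up_zero by auto
    qed
    then show ?thesis using csubspace_zero[OF cW] by blast
  next
    assume "W' = Specht n s"
    then have "Vc n r s \<subseteq> W" unfolding Vc_def W'_def by blast
    then show ?thesis using W by blast
  qed
qed

theorem Vc_iso: "Giso n (Vc n r s) (Specht n s)"
proof -
  define f where "f = the_inv_into (Specht n s) (Up n r)"
  have bU: "bij_betw (Up n r) (Specht n s) (Vc n r s)"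
    unfolding Vc_def using Up_inj by (simp add: bij_betw_def)
  have fU: "\<And>\<psi>. \<psi> \<in> Specht n s \<Longrightarrow> f (Up n r \<psi>) = \<psi>"
    unfolding f_def using the_inv_into_f_f[OF Up_inj] by blast
  show ?thesis unfolding Giso_def
  proof (intro exI[of _ f] conjI allI impI ballI)
    show "bij_betw f (Vc n r s) (Specht n s)" unfolding f_def by (rule bij_betw_the_inv_into[OF bU])
  next
    fix \<phi> \<psi> assume A: "\<phi> \<in> Vc n r s" "\<psi> \<in> Vc n r s"
    then obtain \<phi>' \<psi>' where B: "\<phi>' \<in> Specht n s" "\<psi>' \<in> Specht n s" "\<phi> = Up n r \<phi>'" "\<psi> = Up n r \<psi>'"
      unfolding Vc_def by blast
    have "(\<lambda>x. \<phi> x + \<psi> x) = Up n r (\<lambda>x. \<phi>' x + \<psi>' x)" unfolding B Up_add ..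
    then show "f (\<lambda>x. \<phi> x + \<psi> x) = (\<lambda>x. f \<phi> x + f \<psi> x)"
      using fU B csubspace_add[OF csubspace_Specht B(1,2)] by simp
  next
    fix c \<psi> assume A: "\<psi> \<in> Vc n r s"
    then obtain \<psi>' where B: "\<psi>' \<in> Specht n s" "\<psi> = Up n r \<psi>'" unfolding Vc_def by blast
    have "(\<lambda>x. c * \<psi> x) = Up n r (\<lambda>x. c * \<psi>' x)" unfolding B Up_scale ..
    then show "f (\<lambda>x. c * \<psi> x) = (\<lambda>x. c * f \<psi> x)"
      using fU B csubspace_scale[OF csubspace_Specht B(1)] by simp
  next
    fix g \<psi> assume g: "g permutes {..<n}" and A: "\<psi> \<in> Vc n r s"
    then obtain \<psi>' where B: "\<psi>' \<in> Specht n s" "\<psi> = Up n r \<psi>'" unfolding Vc_def by blast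
    then show "f (act g \<psi>) = act g (f \<psi>)"
      using fU Up_act[OF g] Specht_inv[OF g] by simp
  qed
qed

lemma Vc_unique:
  assumes V: "Girreducible n V" "V \<subseteq> L2 n r" "Giso n V (Specht n s)"
  shows "V = Vc n r s"
proof -
  obtain f where f0: "bij_betw f V (Specht n s)
     \<and> (\<forall>\<phi>\<in>V. \<forall>\<psi>\<in>V. f (\<lambda>x. \<phi> x + \<psi> x) = (\<lambda>x. f \<phi> x + f \<psi> x))
     \<and> (\<forall>c. \<forall>\<psi>\<in>V. f (\<lambda>x. c * \<psi> x) = (\<lambda>x. c * f \<psi> x))
     \<and> (\<forall>g. g permutes {..<n} \<longrightarrow> (\<forall>\<psi>\<in>V. f (act g \<psi>) = act g (f \<psi>)))"
    using V(3) unfolding Giso_def by (rule exE)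
  have f: "bij_betw f V (Specht n s)"
    "\<And>\<phi> \<psi>. \<phi> \<in> V \<Longrightarrow> \<psi> \<in> V \<Longrightarrow> f (\<lambda>x. \<phi> x + \<psi> x) = (\<lambda>x. f \<phi> x + f \<psi> x)"
    "\<And>c \<psi>. \<psi> \<in> V \<Longrightarrow> f (\<lambda>x. c * \<psi> x) = (\<lambda>x. c * f \<psi> x)"
    "\<And>g \<psi>. g permutes {..<n} \<Longrightarrow> \<psi> \<in> V \<Longrightarrow> f (act g \<psi>) = act g (f \<psi>)"
    using f0 by blast+
  have GV: "Gsubspace n V" using Girred_G[OF V(1)] .
  have cV: "csubspace V" and iV: "\<And>g \<psi>. g permutes {..<n} \<Longrightarrow> \<psi> \<in> V \<Longrightarrow> act g \<psi> \<in> V"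
    using GV unfolding Gsubspace_def by auto
  define e0 where "e0 = polytabloid s a0 (b0 s)"
  have e0S: "e0 \<in> Specht n s" unfolding e0_def by (rule pt_Specht[OF T0])
  define w where "w = inv_into V f e0"
  have wV: "w \<in> V" unfolding w_def using f(1) e0S by (metis bij_betw_def inv_into_into)
  have fw: "f w = e0" unfolding w_def using f(1) e0S by (simp add: bij_betw_def f_inv_into_f)
  have finj: "inj_on f V" using f(1) by (simp add: bij_betw_def)
  have wT: "act (tau s a0 (b0 s) F) w = (\<lambda>x. (-1) ^ card F * w x)" if F: "F \<subseteq> {..<s}" for F
  proof -
    have p: "tau s a0 (b0 s) F permutes {..<n}" by (rule tau_permutes[OF T0 F])
    have "f (act (tau s a0 (b0 s) F) w) = f (\<lambda>x. (-1) ^ card F * w x)"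
      unfolding f(4)[OF p wV] f(3)[OF wV] fw e0_def by (rule act_tau_pt[OF T0 F])
    then show ?thesis using finj iV[OF p wV] csubspace_scale[OF cV wV] unfolding inj_on_def by blast
  qed
  have wP: "act \<pi> w = w" if p: "\<pi> permutes {..<n}" "\<forall>i<s. \<pi> (a0 i) = a0 i \<and> \<pi> (b0 s i) = b0 s i" for \<pi>
  proof -
    have "f (act \<pi> w) = f w"
      unfolding f(4)[OF p(1) wV] fw e0_def by (rule act_fix_pt[OF T0 p(1)]) (use p(2) in auto)
    then show ?thesis using finj iV[OF p(1) wV] wV unfolding inj_on_def by blast
  qed
  define u where "u = Up n r e0"
  have uT: "act (tau s a0 (b0 s) F) u = (\<lambda>x. (-1) ^ card F * u x)" if F: "F \<subseteq> {..<s}" for F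
    unfolding u_def Up_act[OF tau_permutes[OF T0 F]] e0_def act_tau_pt[OF T0 F] Up_scale ..
  have uP: "act \<pi> u = u" if p: "\<pi> permutes {..<n}" "\<forall>i<s. \<pi> (a0 i) = a0 i \<and> \<pi> (b0 s i) = b0 s i" for \<pi>
    unfolding u_def Up_act[OF p(1)] e0_def by (subst act_fix_pt[OF T0 p(1)]) (use p(2) in auto)
  define c where "c = w (x0 n s a0 (b0 s) r)"
  define h where "h = (\<lambda>x. 1 * w x + (- c) * u x)"
  have "h = (\<lambda>_. 0)"
  proof (rule fix_lemma[OF T0 sr rs])
    show "h \<in> L2 n r" unfolding h_def
      by (rule csubspace_lin[OF csubspace_L2]) (use wV V(2) Up_L2 u_def in auto)
  next
    fix F assume F: "F \<subseteq> {..<s}"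
    show "act (tau s a0 (b0 s) F) h = (\<lambda>x. (-1) ^ card F * h x)"
      unfolding h_def act_add act_scale wT[OF F] uT[OF F] by (simp add: algebra_simps)
  next
    fix \<pi> assume p: "\<pi> permutes {..<n}" "\<forall>i<s. \<pi> (a0 i) = a0 i \<and> \<pi> (b0 s i) = b0 s i"
    show "act \<pi> h = h" unfolding h_def act_add act_scale wP[OF p] uP[OF p] ..
  next
    show "h (x0 n s a0 (b0 s) r) = 0"
      unfolding h_def u_def e0_def Up_pt_x0[OF T0 sr rs] c_def by simp
  qed
  then have wu: "w = (\<lambda>x. c * u x)" unfolding h_def by (metis (no_types) add.inverse_inverse diff_minus_eq_add
      eq_iff_diff_eq_0 mult_1 mult_minus_left)
  have wVc: "w \<in> Vc n r s"
    unfolding wu u_def Up_scale[symmetric] Vc_def by (rule imageI, rule csubspace_scale[OF csubspace_Specht e0S])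
  have w0: "w \<noteq> (\<lambda>_. 0)"
  proof
    assume "w = (\<lambda>_. 0)"
    then have "(\<lambda>x. 0 * w x) = w" by simp
    then have "f w = (\<lambda>x. 0 * f w x)" using f(3)[OF wV, of 0] by metis
    then have "e0 = (\<lambda>_. 0)" using fw by simp
    then show False using pt_nonzero[OF T0] unfolding e0_def by blast
  qed
  have "V \<inter> Vc n r s = {\<lambda>_. 0} \<or> V \<inter> Vc n r s = V"
    using Girred_dest[OF V(1) Gsubspace_inter[OF GV Gsubspace_Vc]] by blast
  moreover have "V \<inter> Vc n r s \<noteq> {\<lambda>_. 0}" using wV wVc w0 by blast
  ultimately have VVc: "V \<subseteq> Vc n r s" by blast
  have "V = {\<lambda>_. 0} \<or> V = Vc n r s" using Girred_dest[OF Vc_irred GV VVc] .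
  moreover have "V \<noteq> {\<lambda>_. 0}" using Girred_nz[OF V(1)] .
  ultimately show ?thesis by blast
qed

theorem L2comp_eq: "L2comp n r s = Vc n r s"
  unfolding L2comp_def
proof (rule the_equality)
  show "Girreducible n (Vc n r s) \<and> Vc n r s \<subseteq> L2 n r \<and> Giso n (Vc n r s) (Specht n s)"
    using Vc_irred Vc_L2 Vc_iso by blast
next
  fix V assume "Girreducible n V \<and> V \<subseteq> L2 n r \<and> Giso n V (Specht n s)"
  then show "V = Vc n r s" using Vc_unique by blast
qed

end


section \<open>Counting\<close>

definition TabA :: "nat \<Rightarrow> nat set \<Rightarrow> ((nat \<Rightarrow> nat) \<times> (nat \<Rightarrow> nat)) set" where
  "TabA s A = {(a, b). a \<in> {..<s} \<rightarrow>\<^sub>E A \<and> b \<in> {..<s} \<rightarrow>\<^sub>E A \<and> inj_on a {..<s} \<and> inj_on b {..<s}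
     \<and> a ` {..<s} \<inter> b ` {..<s} = {}}"

lemma finite_TabA: "finite A \<Longrightarrow> finite (TabA s A)"
proof -
  assume "finite A"
  then have "finite (({..<s} \<rightarrow>\<^sub>E A) \<times> ({..<s} \<rightarrow>\<^sub>E A))" by (auto intro!: finite_PiE)
  moreover have "TabA s A \<subseteq> ({..<s} \<rightarrow>\<^sub>E A) \<times> ({..<s} \<rightarrow>\<^sub>E A)" unfolding TabA_def by auto
  ultimately show ?thesis by (rule finite_subset[rotated])
qed

definition chi :: "nat set \<Rightarrow> nat \<Rightarrow> complex" where
  "chi X y = (if y \<in> X then 1 else 0)"

definition phi :: "nat set \<Rightarrow> nat set \<Rightarrow> nat \<Rightarrow> nat \<Rightarrow> complex" where
  "phi x1 x2 y z = (chi x2 z - chi x2 y) * (chi x1 z - chi x1 y)"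

definition Cnt :: "nat set \<Rightarrow> nat set \<Rightarrow> nat \<Rightarrow> nat set \<Rightarrow> complex" where
  "Cnt x1 x2 s A = (\<Sum>(a, b)\<in>TabA s A. \<Prod>i<s. phi x1 x2 (a i) (b i))"

lemma TabA_0: "TabA 0 A = {(\<lambda>_. undefined, \<lambda>_. undefined)}"
  unfolding TabA_def by auto

lemma Cnt_0: "Cnt x1 x2 0 A = 1"
  unfolding Cnt_def TabA_0 by simp

lemma Cnt_Suc:
  assumes A: "finite A"
  shows "Cnt x1 x2 (Suc s) A = (\<Sum>y\<in>A. \<Sum>z\<in>A - {y}. phi x1 x2 y z * Cnt x1 x2 s (A - {y, z}))"
proof -
  define Sig where "Sig = Sigma (Sigma A (\<lambda>y. A - {y})) (\<lambda>p. TabA s (A - {fst p, snd p}))"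
  define G where "G = (\<lambda>(a, b). \<Prod>i<Suc s. phi x1 x2 (a i) (b i))"
  define H where "H = (\<lambda>((y, z), (a, b)). phi x1 x2 y z * (\<Prod>i<s. phi x1 x2 (a i) (b i)))"
  define j where "j = (\<lambda>(a::nat\<Rightarrow>nat, b::nat\<Rightarrow>nat). ((a s, b s), (restrict a {..<s}, restrict b {..<s})))"
  define i where "i = (\<lambda>((y::nat, z::nat), (a::nat\<Rightarrow>nat, b::nat\<Rightarrow>nat)). (a(s := y), b(s := z)))"
  have "sum G (TabA (Suc s) A) = sum H Sig"
  proof (rule sum.reindex_bij_witness[where i=i and j=j])
    fix p assume p: "p \<in> TabA (Suc s) A"
    obtain a b where ab: "p = (a, b)" by (cases p)
    have aP: "a \<in> {..<Suc s} \<rightarrow>\<^sub>E A" "b \<in> {..<Suc s} \<rightarrow>\<^sub>E A" and inj: "inj_on a {..<Suc s}" "inj_on b {..<Suc s}"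
      and dj: "a ` {..<Suc s} \<inter> b ` {..<Suc s} = {}"
      using p unfolding ab TabA_def by auto
    have ra: "(restrict a {..<s})(s := a s) = a" "(restrict b {..<s})(s := b s) = b"
    proof -
      show "(restrict a {..<s})(s := a s) = a"
      proof
        fix x show "((restrict a {..<s})(s := a s)) x = a x"
          using PiE_arb[OF aP(1), of x] by (cases "x < s"; cases "x = s") auto
      qed
      show "(restrict b {..<s})(s := b s) = b"
      proof
        fix x show "((restrict b {..<s})(s := b s)) x = b x"
          using PiE_arb[OF aP(2), of x] by (cases "x < s"; cases "x = s") auto
      qed
    qed
    show "i (j p) = p" unfolding ab i_def j_def using ra by simp
    have as: "a s \<in> A" "b s \<in> A" "a s \<noteq> b s"
      using PiE_mem[OF aP(1), of s] PiE_mem[OF aP(2), of s] dj by (auto simp: disjoint_iff)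
    have mem: "a k \<in> A - {a s, b s}" "b k \<in> A - {a s, b s}" if k: "k < s" for k
    proof -
      have "a k \<in> A" "b k \<in> A" using PiE_mem[OF aP(1), of k] PiE_mem[OF aP(2), of k] k by auto
      moreover have "a k \<noteq> a s" using inj_onD[OF inj(1), of k s] k by auto
      moreover have "b k \<noteq> b s" using inj_onD[OF inj(2), of k s] k by auto
      moreover have "a k \<noteq> b s" "b k \<noteq> a s"
      proof -
        have "a k \<in> a ` {..<Suc s}" "b s \<in> b ` {..<Suc s}" "b k \<in> b ` {..<Suc s}" "a s \<in> a ` {..<Suc s}"
          using k by auto
        then show "a k \<noteq> b s" "b k \<noteq> a s" using dj by blast+
      qed
      ultimately show "a k \<in> A - {a s, b s}" "b k \<in> A - {a s, b s}" by auto
    qed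
    have "restrict a {..<s} \<in> {..<s} \<rightarrow>\<^sub>E A - {a s, b s}" "restrict b {..<s} \<in> {..<s} \<rightarrow>\<^sub>E A - {a s, b s}"
      using mem by (auto simp: restrict_PiE_iff)
    moreover have "inj_on (restrict a {..<s}) {..<s}" "inj_on (restrict b {..<s}) {..<s}"
      using inj_on_subset[OF inj(1), of "{..<s}"] inj_on_subset[OF inj(2), of "{..<s}"]
      by (auto simp: inj_on_def)
    moreover have "restrict a {..<s} ` {..<s} \<inter> restrict b {..<s} ` {..<s} = {}"
    proof -
      have "restrict a {..<s} ` {..<s} \<subseteq> a ` {..<Suc s}" "restrict b {..<s} ` {..<s} \<subseteq> b ` {..<Suc s}" by auto
      then show ?thesis using dj by blast
    qed
    ultimately show "j p \<in> Sig" unfolding ab j_def Sig_def TabA_def using as by auto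
    show "H (j p) = G p"
      unfolding ab j_def H_def G_def by (simp add: prod.lessThan_Suc mult.commute)
  next
    fix q assume q: "q \<in> Sig"
    obtain y z a b where yz: "q = ((y, z), (a, b))" by (metis prod.collapse)
    have yz2: "y \<in> A" "z \<in> A" "y \<noteq> z" and aP: "a \<in> {..<s} \<rightarrow>\<^sub>E A - {y, z}" "b \<in> {..<s} \<rightarrow>\<^sub>E A - {y, z}"
      and inj: "inj_on a {..<s}" "inj_on b {..<s}" and dj: "a ` {..<s} \<inter> b ` {..<s} = {}"
      using q unfolding yz Sig_def TabA_def by auto
    have ra: "restrict (a(s := y)) {..<s} = a" "restrict (b(s := z)) {..<s} = b"
    proof -
      show "restrict (a(s := y)) {..<s} = a"
      proof
        fix x show "restrict (a(s := y)) {..<s} x = a x" using PiE_arb[OF aP(1), of x] by (cases "x < s") auto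
      qed
      show "restrict (b(s := z)) {..<s} = b"
      proof
        fix x show "restrict (b(s := z)) {..<s} x = b x" using PiE_arb[OF aP(2), of x] by (cases "x < s") auto
      qed
    qed
    show "j (i q) = q" unfolding yz i_def j_def using ra by simp
    have mem: "a k \<in> A - {y, z}" "b k \<in> A - {y, z}" if "k < s" for k
      using PiE_mem[OF aP(1), of k] PiE_mem[OF aP(2), of k] that by auto
    have "a(s := y) \<in> {..<Suc s} \<rightarrow>\<^sub>E A" "b(s := z) \<in> {..<Suc s} \<rightarrow>\<^sub>E A"
      using aP yz2 mem by (auto simp: PiE_iff extensional_def less_Suc_eq)
    moreover have "inj_on (a(s := y)) {..<Suc s}"
    proof (rule inj_onI)
      fix u v assume uv: "u \<in> {..<Suc s}" "v \<in> {..<Suc s}" "(a(s := y)) u = (a(s := y)) v"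
      show "u = v"
      proof (cases "u = s"; cases "v = s")
        assume "u \<noteq> s" "v \<noteq> s" then show ?thesis using uv inj_onD[OF inj(1), of u v] by auto
      next
        assume "u = s" "v \<noteq> s" then show ?thesis using uv mem(1)[of v] by auto
      next
        assume "u \<noteq> s" "v = s" then show ?thesis using uv mem(1)[of u] by auto
      qed simp
    qed
    moreover have "inj_on (b(s := z)) {..<Suc s}"
    proof (rule inj_onI)
      fix u v assume uv: "u \<in> {..<Suc s}" "v \<in> {..<Suc s}" "(b(s := z)) u = (b(s := z)) v"
      show "u = v"
      proof (cases "u = s"; cases "v = s")
        assume "u \<noteq> s" "v \<noteq> s" then show ?thesis using uv inj_onD[OF inj(2), of u v] by auto
      next
        assume "u = s" "v \<noteq> s" then show ?thesis using uv mem(2)[of v] by auto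
      next
        assume "u \<noteq> s" "v = s" then show ?thesis using uv mem(2)[of u] by auto
      qed simp
    qed
    moreover have "(a(s := y)) ` {..<Suc s} \<inter> (b(s := z)) ` {..<Suc s} = {}"
    proof -
      have e1: "(a(s := y)) ` {..<Suc s} = insert y (a ` {..<s})" unfolding lessThan_Suc by auto
      have e2: "(b(s := z)) ` {..<Suc s} = insert z (b ` {..<s})" unfolding lessThan_Suc by auto
      show ?thesis unfolding e1 e2 using dj yz2 mem by auto
    qed
    ultimately show "i q \<in> TabA (Suc s) A" unfolding yz i_def TabA_def by auto
  qed
  also have "sum H Sig = (\<Sum>p\<in>Sigma A (\<lambda>y. A - {y}). \<Sum>q\<in>TabA s (A - {fst p, snd p}). H (p, q))"
    unfolding Sig_def
    by (rule sum.Sigma[symmetric, where g="\<lambda>p q. H (p, q)", unfolded case_prod_beta prod.collapse])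
       (use A in \<open>auto intro: finite_TabA\<close>)
  also have "\<dots> = (\<Sum>y\<in>A. \<Sum>z\<in>A - {y}. \<Sum>q\<in>TabA s (A - {y, z}). H ((y, z), q))"
    using sum.Sigma[of A "\<lambda>y. A - {y}" "\<lambda>y z. \<Sum>q\<in>TabA s (A - {y, z}). H ((y, z), q)"] A
    by (simp add: case_prod_beta)
  finally show ?thesis
    unfolding Cnt_def G_def H_def by (simp add: sum_distrib_left case_prod_beta)
qed

lemma pair_sum:
  fixes G :: "nat \<Rightarrow> nat \<Rightarrow> complex"
  assumes A: "finite A" and UW: "U \<inter> W = {}" and G: "\<And>y z. y \<in> A \<inter> U \<Longrightarrow> z \<in> A \<inter> W \<Longrightarrow> G y z = c"
  shows "(\<Sum>y\<in>A. \<Sum>z\<in>A - {y}. (if y \<in> U \<and> z \<in> W then G y z else 0)) = of_nat (card (A \<inter> U)) * of_nat (card (A \<inter> W)) * c"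
proof -
  have "(\<Sum>z\<in>A - {y}. (if y \<in> U \<and> z \<in> W then G y z else 0)) = (if y \<in> U then of_nat (card (A \<inter> W)) * c else 0)"
    if y: "y \<in> A" for y
  proof (cases "y \<in> U")
    case True
    have "(\<Sum>z\<in>A - {y}. (if y \<in> U \<and> z \<in> W then G y z else 0)) = (\<Sum>z\<in>A - {y}. (if z \<in> W then c else 0))"
      using True y G by (intro sum.cong) auto
    also have "\<dots> = (\<Sum>z\<in>(A - {y}) \<inter> W. c)" by (rule sum.inter_restrict[symmetric]) (use A in simp)
    also have "(A - {y}) \<inter> W = A \<inter> W" using True UW by auto
    finally show ?thesis using True by simp
  qed simp
  then have "(\<Sum>y\<in>A. \<Sum>z\<in>A - {y}. (if y \<in> U \<and> z \<in> W then G y z else 0))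
      = (\<Sum>y\<in>A. (if y \<in> U then of_nat (card (A \<inter> W)) * c else 0))" by (intro sum.cong) auto
  also have "\<dots> = (\<Sum>y\<in>A \<inter> U. of_nat (card (A \<inter> W)) * c)" by (rule sum.inter_restrict[symmetric]) (use A in simp)
  finally show ?thesis by simp
qed

lemma card_rem2:
  assumes "finite A" "y \<in> A" "z \<in> A" "y \<noteq> z"
  shows "card ((A - {y, z}) \<inter> X) = card (A \<inter> X) - (if y \<in> X then 1 else 0) - (if z \<in> X then 1 else 0)"
proof -
  have "(A - {y, z}) \<inter> X = ((A \<inter> X) - {y}) - {z}" by auto
  then show ?thesis using assms by (simp add: card_Diff_singleton_if)
qed

lemma card_rem2': "finite A \<Longrightarrow> y \<in> A \<Longrightarrow> z \<in> A \<Longrightarrow> y \<noteq> z \<Longrightarrow> card (A - {y, z}) = card A - 2"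
  using card_rem2[of A y z UNIV] by simp

lemma card_split2: "finite A \<Longrightarrow> card (A \<inter> X) = card (A \<inter> (X \<inter> Y)) + card (A \<inter> (X - Y))"
proof -
  assume A: "finite A"
  have "A \<inter> X = (A \<inter> (X \<inter> Y)) \<union> (A \<inter> (X - Y))" by auto
  moreover have "(A \<inter> (X \<inter> Y)) \<inter> (A \<inter> (X - Y)) = {}" by auto
  ultimately show ?thesis using A by (metis card_Un_disjoint finite_Int)
qed

lemma card_split3: "finite A \<Longrightarrow> card A = card (A \<inter> x1) + card (A \<inter> (x2 - x1)) + card (A - (x1 \<union> x2))"
proof -
  assume A: "finite A"
  have "A = (A \<inter> x1) \<union> (A \<inter> (x2 - x1)) \<union> (A - (x1 \<union> x2))" by auto
  moreover have "(A \<inter> x1) \<inter> (A \<inter> (x2 - x1)) = {}" "((A \<inter> x1) \<union> (A \<inter> (x2 - x1))) \<inter> (A - (x1 \<union> x2)) = {}" by auto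
  ultimately show ?thesis using A by (metis card_Un_disjoint finite_Int finite_Diff finite_Un)
qed

lemma phi_decomp: "phi x1 x2 y z =
    (if y \<in> x1 \<inter> x2 \<and> z \<in> - (x1 \<union> x2) then 1 else 0) + (if y \<in> - (x1 \<union> x2) \<and> z \<in> x1 \<inter> x2 then 1 else 0)
  - (if y \<in> x2 - x1 \<and> z \<in> x1 - x2 then 1 else 0) - (if y \<in> x1 - x2 \<and> z \<in> x2 - x1 then 1 else 0)"
  unfolding phi_def chi_def by auto

theorem Cnt_formula:
  "finite A \<Longrightarrow> Cnt x1 x2 s A = 2 ^ s * poly (Rod s (card (A \<inter> x1)) (card (A \<inter> x2)) (card A)) (of_nat (card (A \<inter> (x2 - x1))))"
proof (induction s arbitrary: A)
  case 0
  then show ?case by (simp add: Cnt_0)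
next
  case (Suc s)
  note A = Suc.prems
  define c1 where "c1 = card (A \<inter> x1)"
  define c2 where "c2 = card (A \<inter> x2)"
  define m where "m = card A"
  define k where "k = card (A \<inter> (x2 - x1))"
  define cI where "cI = card (A \<inter> (x1 \<inter> x2))"
  define cO where "cO = card (A \<inter> (- (x1 \<union> x2)))"
  define cP where "cP = card (A \<inter> (x2 - x1))"
  define cQ where "cQ = card (A \<inter> (x1 - x2))"
  define R where "R = Rod s (c1 - 1) (c2 - 1) (m - 2)"
  define Q where "Q B = 2 ^ s * poly (Rod s (card (B \<inter> x1)) (card (B \<inter> x2)) (card B)) (of_nat (card (B \<inter> (x2 - x1))))" for B
  have e2: "c2 = cI + k" unfolding c2_def cI_def k_def using card_split2[OF A, of x2 x1] by (simp add: Int_commute)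
  have e1: "c1 = cI + cQ" unfolding c1_def cI_def cQ_def using card_split2[OF A, of x1 x2] by simp
  have "A - (x1 \<union> x2) = A \<inter> (- (x1 \<union> x2))" by auto
  then have em: "m = c1 + k + cO" unfolding m_def c1_def k_def cO_def using card_split3[OF A, of x1 x2] by simp
  have "Cnt x1 x2 (Suc s) A = (\<Sum>y\<in>A. \<Sum>z\<in>A - {y}. phi x1 x2 y z * Q (A - {y, z}))"
    unfolding Cnt_Suc[OF A] Q_def using A by (intro sum.cong refl) (simp add: Suc.IH)
  also have "\<dots> = (\<Sum>y\<in>A. \<Sum>z\<in>A - {y}. (if y \<in> x1 \<inter> x2 \<and> z \<in> - (x1 \<union> x2) then Q (A - {y, z}) else 0))
     + (\<Sum>y\<in>A. \<Sum>z\<in>A - {y}. (if y \<in> - (x1 \<union> x2) \<and> z \<in> x1 \<inter> x2 then Q (A - {y, z}) else 0))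
     - (\<Sum>y\<in>A. \<Sum>z\<in>A - {y}. (if y \<in> x2 - x1 \<and> z \<in> x1 - x2 then Q (A - {y, z}) else 0))
     - (\<Sum>y\<in>A. \<Sum>z\<in>A - {y}. (if y \<in> x1 - x2 \<and> z \<in> x2 - x1 then Q (A - {y, z}) else 0))"
  proof -
    have pw: "phi x1 x2 y z * Q (A - {y, z}) =
        (if y \<in> x1 \<inter> x2 \<and> z \<in> - (x1 \<union> x2) then Q (A - {y, z}) else 0)
      + (if y \<in> - (x1 \<union> x2) \<and> z \<in> x1 \<inter> x2 then Q (A - {y, z}) else 0)
      - (if y \<in> x2 - x1 \<and> z \<in> x1 - x2 then Q (A - {y, z}) else 0)
      - (if y \<in> x1 - x2 \<and> z \<in> x2 - x1 then Q (A - {y, z}) else 0)" for y z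
      unfolding phi_decomp by (simp add: algebra_simps)
    show ?thesis unfolding pw by (simp only: sum.distrib sum_subtractf)
  qed
  also have "\<dots> = of_nat cI * of_nat cO * (2 ^ s * poly R (of_nat k)) + of_nat cO * of_nat cI * (2 ^ s * poly R (of_nat k))
     - of_nat cP * of_nat cQ * (2 ^ s * poly R (of_nat (k - 1))) - of_nat cQ * of_nat cP * (2 ^ s * poly R (of_nat (k - 1)))"
  proof -
    have c: "card ((A - {y, z}) \<inter> X) = card (A \<inter> X) - (if y \<in> X then 1 else 0) - (if z \<in> X then 1 else 0)"
      "card (A - {y, z}) = m - 2"
      if "y \<in> A" "z \<in> A" "y \<noteq> z" for y z X using card_rem2[OF A that] card_rem2'[OF A that] m_def by auto
    have s1: "(\<Sum>y\<in>A. \<Sum>z\<in>A - {y}. (if y \<in> x1 \<inter> x2 \<and> z \<in> - (x1 \<union> x2) then Q (A - {y, z}) else 0))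
        = of_nat (card (A \<inter> (x1 \<inter> x2))) * of_nat (card (A \<inter> (- (x1 \<union> x2)))) * (2 ^ s * poly R (of_nat k))"
    proof (rule pair_sum[OF A])
      show "(x1 \<inter> x2) \<inter> (- (x1 \<union> x2)) = {}" by auto
      fix y z assume yz: "y \<in> A \<inter> (x1 \<inter> x2)" "z \<in> A \<inter> (- (x1 \<union> x2))"
      then have yz': "y \<in> A" "z \<in> A" "y \<noteq> z" by auto
      have "card ((A - {y, z}) \<inter> x1) = c1 - 1" "card ((A - {y, z}) \<inter> x2) = c2 - 1"
        "card ((A - {y, z}) \<inter> (x2 - x1)) = k" "card (A - {y, z}) = m - 2"
        using c[OF yz'] yz unfolding c1_def c2_def k_def by auto
      then show "Q (A - {y, z}) = 2 ^ s * poly R (of_nat k)" unfolding Q_def R_def by simp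
    qed
    have s2: "(\<Sum>y\<in>A. \<Sum>z\<in>A - {y}. (if y \<in> - (x1 \<union> x2) \<and> z \<in> x1 \<inter> x2 then Q (A - {y, z}) else 0))
        = of_nat (card (A \<inter> (- (x1 \<union> x2)))) * of_nat (card (A \<inter> (x1 \<inter> x2))) * (2 ^ s * poly R (of_nat k))"
    proof (rule pair_sum[OF A])
      show "(- (x1 \<union> x2)) \<inter> (x1 \<inter> x2) = {}" by auto
      fix y z assume yz: "y \<in> A \<inter> (- (x1 \<union> x2))" "z \<in> A \<inter> (x1 \<inter> x2)"
      then have yz': "y \<in> A" "z \<in> A" "y \<noteq> z" by auto
      have "card ((A - {y, z}) \<inter> x1) = c1 - 1" "card ((A - {y, z}) \<inter> x2) = c2 - 1"
        "card ((A - {y, z}) \<inter> (x2 - x1)) = k" "card (A - {y, z}) = m - 2"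
        using c[OF yz'] yz unfolding c1_def c2_def k_def by auto
      then show "Q (A - {y, z}) = 2 ^ s * poly R (of_nat k)" unfolding Q_def R_def by simp
    qed
    have s3: "(\<Sum>y\<in>A. \<Sum>z\<in>A - {y}. (if y \<in> x2 - x1 \<and> z \<in> x1 - x2 then Q (A - {y, z}) else 0))
        = of_nat (card (A \<inter> (x2 - x1))) * of_nat (card (A \<inter> (x1 - x2))) * (2 ^ s * poly R (of_nat (k - 1)))"
    proof (rule pair_sum[OF A])
      show "(x2 - x1) \<inter> (x1 - x2) = {}" by auto
      fix y z assume yz: "y \<in> A \<inter> (x2 - x1)" "z \<in> A \<inter> (x1 - x2)"
      then have yz': "y \<in> A" "z \<in> A" "y \<noteq> z" by auto
      have "card ((A - {y, z}) \<inter> x1) = c1 - 1" "card ((A - {y, z}) \<inter> x2) = c2 - 1"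
        "card ((A - {y, z}) \<inter> (x2 - x1)) = (k - 1)" "card (A - {y, z}) = m - 2"
        using c[OF yz'] yz unfolding c1_def c2_def k_def by auto
      then show "Q (A - {y, z}) = 2 ^ s * poly R (of_nat (k - 1))" unfolding Q_def R_def by simp
    qed
    have s4: "(\<Sum>y\<in>A. \<Sum>z\<in>A - {y}. (if y \<in> x1 - x2 \<and> z \<in> x2 - x1 then Q (A - {y, z}) else 0))
        = of_nat (card (A \<inter> (x1 - x2))) * of_nat (card (A \<inter> (x2 - x1))) * (2 ^ s * poly R (of_nat (k - 1)))"
    proof (rule pair_sum[OF A])
      show "(x1 - x2) \<inter> (x2 - x1) = {}" by auto
      fix y z assume yz: "y \<in> A \<inter> (x1 - x2)" "z \<in> A \<inter> (x2 - x1)"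
      then have yz': "y \<in> A" "z \<in> A" "y \<noteq> z" by auto
      have "card ((A - {y, z}) \<inter> x1) = c1 - 1" "card ((A - {y, z}) \<inter> x2) = c2 - 1"
        "card ((A - {y, z}) \<inter> (x2 - x1)) = (k - 1)" "card (A - {y, z}) = m - 2"
        using c[OF yz'] yz unfolding c1_def c2_def k_def by auto
      then show "Q (A - {y, z}) = 2 ^ s * poly R (of_nat (k - 1))" unfolding Q_def R_def by simp
    qed
    show ?thesis unfolding s1 s2 s3 s4 cI_def cO_def cP_def cQ_def ..
  qed
  also have "\<dots> = 2 ^ Suc s * poly (Rod (Suc s) c1 c2 m) (of_nat k)"
  proof -
    have kP: "cP = k" unfolding cP_def k_def ..
    have r1: "poly (pcompose R [:-1, 1:]) (of_nat k) * of_nat k = poly R (of_nat (k - 1)) * of_nat k"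
      by (cases k) (auto simp: poly_pcompose)
    have cs: "(of_nat c2 - of_nat k :: complex) = of_nat cI" "(of_nat m - of_nat c1 - of_nat k :: complex) = of_nat cO"
      "(of_nat c1 - of_nat c2 + of_nat k :: complex) = of_nat cQ"
      using e1 e2 em by auto
    have eq: "poly (Rod (Suc s) c1 c2 m) (of_nat k) = of_nat cI * of_nat cO * poly R (of_nat k) - of_nat k * of_nat cQ * poly R (of_nat (k - 1))"
      unfolding Rod.simps R_def[symmetric] poly_diff poly_mult
      using r1 cs by (simp add: algebra_simps) metis
    show ?thesis unfolding eq kP by (simp add: algebra_simps del: Rod.simps)
  qed
  finally show ?case unfolding c1_def c2_def m_def k_def .
qed


section \<open>Kernel operators\<close>

definition Xr :: "nat \<Rightarrow> nat \<Rightarrow> nat set set" where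
  "Xr n r = {x. x \<subseteq> {..<n} \<and> card x = r}"

lemma finite_Xr: "finite (Xr n r)"
  unfolding Xr_def by (rule finite_subset[of _ "Pow {..<n}"]) auto

lemma kernel_op_eq: "kernel_op n r1 r2 lam \<psi> = (\<lambda>x2. if x2 \<in> Xr n r2 then (\<Sum>x1\<in>Xr n r1. lam (card (x2 - x1)) * \<psi> x1) else 0)"
  unfolding kernel_op_def Xr_def by simp

lemma kernel_op_lin: "kernel_op n r1 r2 lam (\<lambda>x. c * \<phi> x + d * \<psi> x) = (\<lambda>x. c * kernel_op n r1 r2 lam \<phi> x + d * kernel_op n r1 r2 lam \<psi> x)"
  unfolding kernel_op_eq by (auto simp: sum.distrib sum_distrib_left algebra_simps)

lemma kernel_op_zero: "kernel_op n r1 r2 lam (\<lambda>_. 0) = (\<lambda>_. 0)"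
  unfolding kernel_op_eq by auto

lemma kernel_op_lam_lin: "kernel_op n r1 r2 (\<lambda>k. c * f k + d * g k) \<psi> = (\<lambda>x. c * kernel_op n r1 r2 f \<psi> x + d * kernel_op n r1 r2 g \<psi> x)"
  unfolding kernel_op_eq by (auto simp: sum.distrib sum_distrib_left algebra_simps)

lemma kernel_op_L2: "kernel_op n r1 r2 lam \<psi> \<in> L2 n r2"
  unfolding kernel_op_def L2_def by auto

lemma kernel_op_delta:
  assumes "x1 \<in> Xr n r1" "x2 \<in> Xr n r2"
  shows "kernel_op n r1 r2 lam (\<lambda>x. if x = x1 then 1 else 0) x2 = lam (card (x2 - x1))"
  unfolding kernel_op_eq using assms finite_Xr by (simp add: if_distrib sum.delta' cong: if_cong)

lemma Xr_perm: "g permutes {..<n} \<Longrightarrow> x \<in> Xr n r \<longleftrightarrow> g ` x \<in> Xr n r"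
proof -
  assume g: "g permutes {..<n}"
  have "g ` x \<subseteq> {..<n} \<longleftrightarrow> x \<subseteq> {..<n}" using permutes_in_image[OF g] by auto
  moreover have "card (g ` x) = card x" by (rule card_image) (rule inj_on_subset[OF permutes_inj[OF g]], simp)
  ultimately show ?thesis unfolding Xr_def by auto
qed

lemma kernel_op_act:
  assumes g: "g permutes {..<n}"
  shows "act g (kernel_op n r1 r2 lam \<psi>) = kernel_op n r1 r2 lam (act g \<psi>)"
proof
  fix x2
  have ig: "inv g permutes {..<n}" by (rule permutes_inv[OF g])
  have bg: "bij g" "bij (inv g)" using permutes_bij[OF g] permutes_bij[OF ig] by auto
  have ii: "inv g ` (g ` y) = y" "g ` (inv g ` y) = y" for y
    by (simp_all add: image_image permutes_inverses[OF g])
  have cd: "card (inv g ` x2 - y) = card (x2 - g ` y)" for y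
  proof -
    have "inv g ` x2 - y = inv g ` (x2 - g ` y)"
      using ii bij_is_inj[OF bg(2)] by (metis image_set_diff)
    then show ?thesis using card_image[OF inj_on_subset[OF bij_is_inj[OF bg(2)] subset_UNIV]] by simp
  qed
  have "(\<Sum>x1\<in>Xr n r1. lam (card (inv g ` x2 - x1)) * \<psi> x1) = (\<Sum>x1\<in>Xr n r1. lam (card (x2 - x1)) * \<psi> (inv g ` x1))"
  proof (rule sum.reindex_bij_witness[where i="\<lambda>y. inv g ` y" and j="\<lambda>y. g ` y"])
    fix y assume "y \<in> Xr n r1"
    then show "inv g ` (g ` y) = y" "g ` y \<in> Xr n r1" using ii Xr_perm[OF g] by auto
    show "lam (card (x2 - g ` y)) * \<psi> (inv g ` (g ` y)) = lam (card (inv g ` x2 - y)) * \<psi> y"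
      using cd ii by simp
  next
    fix y assume "y \<in> Xr n r1"
    then show "g ` (inv g ` y) = y" "inv g ` y \<in> Xr n r1" using ii Xr_perm[OF ig] by auto
  qed
  moreover have "inv g ` x2 \<in> Xr n r2 \<longleftrightarrow> x2 \<in> Xr n r2" using Xr_perm[OF ig] by simp
  ultimately show "act g (kernel_op n r1 r2 lam \<psi>) x2 = kernel_op n r1 r2 lam (act g \<psi>) x2"
    unfolding kernel_op_eq act_def by simp
qed

lemma prod_chi: "finite I \<Longrightarrow> (\<Prod>i\<in>I. chi x (f i)) = (if f ` I \<subseteq> x then 1 else 0)"
  by (induction I rule: finite_induct) (auto simp: chi_def)

lemma Up_prod:
  assumes T: "tab n s a b" and sr: "s \<le> r" and rs: "r + s \<le> n" and x: "x \<subseteq> {..<n}" "card x = r"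
  shows "Up n r (polytabloid s a b) x = (\<Prod>i<s. chi x (b i) - chi x (a i))"
proof -
  have "(\<Prod>i<s. chi x (b i) - chi x (a i)) = (\<Prod>i<s. (- chi x (a i)) + chi x (b i))" by simp
  also have "\<dots> = (\<Sum>E\<in>Pow {..<s}. (\<Prod>i\<in>E. - chi x (a i)) * (\<Prod>i\<in>{..<s} - E. chi x (b i)))"
    by (rule prod_add) simp
  also have "\<dots> = (\<Sum>E\<in>Pow {..<s}. (-1) ^ card E * (if SE s a b E \<subseteq> x then 1 else 0))"
  proof (rule sum.cong[OF refl])
    fix E assume E: "E \<in> Pow {..<s}"
    have fE: "finite E" using E finite_subset by blast
    have "(\<Prod>i\<in>E. - chi x (a i)) = (\<Prod>i\<in>E. (-1) * chi x (a i))" by simp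
    also have "\<dots> = (\<Prod>i\<in>E. -1) * (\<Prod>i\<in>E. chi x (a i))" by (rule prod.distrib)
    finally have m: "(\<Prod>i\<in>E. - chi x (a i)) = (-1) ^ card E * (\<Prod>i\<in>E. chi x (a i))" by simp
    have "(\<Prod>i<s. chi x (ch a b E i)) = (\<Prod>i\<in>{..<s} - E. chi x (ch a b E i)) * (\<Prod>i\<in>E. chi x (ch a b E i))"
      using E by (intro prod.subset_diff) auto
    also have "\<dots> = (\<Prod>i\<in>{..<s} - E. chi x (b i)) * (\<Prod>i\<in>E. chi x (a i))"
      unfolding ch_def by (intro arg_cong2[where f="(*)"] prod.cong) auto
    finally have "(\<Prod>i\<in>E. chi x (a i)) * (\<Prod>i\<in>{..<s} - E. chi x (b i)) = (if SE s a b E \<subseteq> x then 1 else 0)"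
      using prod_chi[of "{..<s}" x "ch a b E"] unfolding SE_def by (simp add: mult.commute)
    then show "(\<Prod>i\<in>E. - chi x (a i)) * (\<Prod>i\<in>{..<s} - E. chi x (b i)) = (-1) ^ card E * (if SE s a b E \<subseteq> x then 1 else 0)"
      unfolding m by (simp add: mult.assoc)
  qed
  finally show ?thesis using Up_pt[OF T sr rs] x by simp
qed

definition TF :: "nat \<Rightarrow> nat \<Rightarrow> ((nat \<Rightarrow> nat) \<times> (nat \<Rightarrow> nat)) set" where
  "TF n s = TabA s {..<n}"

definition UU :: "nat \<Rightarrow> nat \<Rightarrow> nat \<Rightarrow> (nat \<Rightarrow> nat) \<times> (nat \<Rightarrow> nat) \<Rightarrow> (nat set \<Rightarrow> complex)" where
  "UU n s r t = Up n r (polytabloid s (fst t) (snd t))"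

definition MM :: "nat \<Rightarrow> nat \<Rightarrow> nat \<Rightarrow> nat \<Rightarrow> (nat set \<Rightarrow> complex) \<Rightarrow> (nat set \<Rightarrow> complex)" where
  "MM n s r r' \<psi> = (\<lambda>x. \<Sum>t\<in>TF n s. inner_L2 n \<psi> (UU n s r t) * UU n s r' t x)"

lemma finite_TF: "finite (TF n s)"
  unfolding TF_def by (rule finite_TabA) simp

lemma TF_tab: "t \<in> TF n s \<Longrightarrow> tab n s (fst t) (snd t)"
  unfolding TF_def TabA_def tab_def by (auto simp: PiE_iff)

lemma UU_real: "t \<in> TF n s \<Longrightarrow> cnj (UU n s r t x) = UU n s r t x"
  unfolding UU_def Up_def using pt_real[OF TF_tab] by (simp add: cnj_sum)

lemma UU_supp: "x \<notin> Xr n r \<Longrightarrow> UU n s r t x = 0"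
  unfolding UU_def Up_def Xr_def by auto

lemma Xr_Pow: "Xr n r \<subseteq> Pow {..<n}"
  unfolding Xr_def by auto

lemma inner_UU:
  assumes t: "t \<in> TF n s"
  shows "inner_L2 n \<psi> (UU n s r t) = (\<Sum>x\<in>Xr n r. \<psi> x * UU n s r t x)"
proof -
  have "inner_L2 n \<psi> (UU n s r t) = (\<Sum>x\<in>Pow {..<n}. \<psi> x * UU n s r t x)"
    unfolding inner_L2_def using UU_real[OF t] by simp
  also have "\<dots> = (\<Sum>x\<in>Xr n r. \<psi> x * UU n s r t x)"
    by (rule sum.mono_neutral_right) (auto simp: Xr_Pow UU_supp)
  finally show ?thesis .
qed

lemma UU_in_Vc: "t \<in> TF n s \<Longrightarrow> UU n s r t \<in> Vc n r s"
  unfolding UU_def Vc_def using pt_Specht[OF TF_tab] by blast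

lemma MM_in_Vc: "MM n s r r' \<psi> \<in> Vc n r' s"
  unfolding MM_def
  by (rule csubspace_sum[OF csubspace_Vc finite_TF]) (rule csubspace_scale[OF csubspace_Vc UU_in_Vc])

lemma kernel_sum:
  assumes r: "s \<le> r" "r + s \<le> n" and r': "s \<le> r'" "r' + s \<le> n"
    and x: "x1 \<in> Xr n r" "x2 \<in> Xr n r'"
  shows "(\<Sum>t\<in>TF n s. UU n s r' t x2 * UU n s r t x1) = 2 ^ s * poly (Rod s r r' n) (of_nat (card (x2 - x1)))"
proof -
  have "(\<Sum>t\<in>TF n s. UU n s r' t x2 * UU n s r t x1) = (\<Sum>t\<in>TF n s. \<Prod>i<s. phi x1 x2 (fst t i) (snd t i))"
  proof (rule sum.cong[OF refl])
    fix t assume t: "t \<in> TF n s"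
    have "UU n s r' t x2 = (\<Prod>i<s. chi x2 (snd t i) - chi x2 (fst t i))"
      unfolding UU_def by (rule Up_prod[OF TF_tab[OF t] r']) (use x in \<open>auto simp: Xr_def\<close>)
    moreover have "UU n s r t x1 = (\<Prod>i<s. chi x1 (snd t i) - chi x1 (fst t i))"
      unfolding UU_def by (rule Up_prod[OF TF_tab[OF t] r]) (use x in \<open>auto simp: Xr_def\<close>)
    ultimately show "UU n s r' t x2 * UU n s r t x1 = (\<Prod>i<s. phi x1 x2 (fst t i) (snd t i))"
      unfolding phi_def by (simp add: prod.distrib)
  qed
  also have "\<dots> = Cnt x1 x2 s {..<n}" unfolding Cnt_def TF_def by (simp add: case_prod_beta)
  also have "\<dots> = 2 ^ s * poly (Rod s (card ({..<n} \<inter> x1)) (card ({..<n} \<inter> x2)) (card {..<n})) (of_nat (card ({..<n} \<inter> (x2 - x1))))"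
    by (rule Cnt_formula) simp
  finally have F: "(\<Sum>t\<in>TF n s. UU n s r' t x2 * UU n s r t x1) = 2 ^ s * poly (Rod s (card ({..<n} \<inter> x1)) (card ({..<n} \<inter> x2)) (card {..<n})) (of_nat (card ({..<n} \<inter> (x2 - x1))))" .
  have "{..<n} \<inter> x1 = x1" "{..<n} \<inter> x2 = x2" "{..<n} \<inter> (x2 - x1) = x2 - x1" using x unfolding Xr_def by auto
  then show ?thesis using F x unfolding Xr_def by simp
qed

lemma KM:
  assumes r: "s \<le> r" "r + s \<le> n" and r': "s \<le> r'" "r' + s \<le> n"
  shows "kernel_op n r r' (\<lambda>k. 2 ^ s * poly (Rod s r r' n) (of_nat k)) \<psi> = MM n s r r' \<psi>"
proof
  fix x2
  show "kernel_op n r r' (\<lambda>k. 2 ^ s * poly (Rod s r r' n) (of_nat k)) \<psi> x2 = MM n s r r' \<psi> x2"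
  proof (cases "x2 \<in> Xr n r'")
    case True
    have "(\<Sum>x1\<in>Xr n r. 2 ^ s * poly (Rod s r r' n) (of_nat (card (x2 - x1))) * \<psi> x1)
        = (\<Sum>x1\<in>Xr n r. \<Sum>t\<in>TF n s. UU n s r' t x2 * UU n s r t x1 * \<psi> x1)"
    proof (rule sum.cong[OF refl])
      fix x1 assume "x1 \<in> Xr n r"
      then show "2 ^ s * poly (Rod s r r' n) (of_nat (card (x2 - x1))) * \<psi> x1 = (\<Sum>t\<in>TF n s. UU n s r' t x2 * UU n s r t x1 * \<psi> x1)"
        using kernel_sum[OF r r' _ True, of x1] sum_distrib_right[of "\<lambda>t. UU n s r' t x2 * UU n s r t x1" "TF n s" "\<psi> x1"]
        by simp
    qed
    also have "\<dots> = (\<Sum>t\<in>TF n s. UU n s r' t x2 * (\<Sum>x1\<in>Xr n r. \<psi> x1 * UU n s r t x1))"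
      by (subst sum.swap) (simp add: sum_distrib_left algebra_simps)
    also have "\<dots> = MM n s r r' \<psi> x2"
      unfolding MM_def by (intro sum.cong refl) (simp add: inner_UU mult.commute)
    finally show ?thesis unfolding kernel_op_eq using True by simp
  next
    case False
    then show ?thesis unfolding kernel_op_eq MM_def using UU_supp[OF False] by simp
  qed
qed


lemma kernel_op_scale: "kernel_op n r1 r2 lam (\<lambda>x. c * \<phi> x) = (\<lambda>x. c * kernel_op n r1 r2 lam \<phi> x)"
  using kernel_op_lin[of n r1 r2 lam c \<phi> 0 \<phi>] by simp

lemma kernel_op_add: "kernel_op n r1 r2 lam (\<lambda>x. \<phi> x + \<psi> x) = (\<lambda>x. kernel_op n r1 r2 lam \<phi> x + kernel_op n r1 r2 lam \<psi> x)"
  using kernel_op_lin[of n r1 r2 lam 1 \<phi> 1 \<psi>] by simp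

lemma csubspace_L2X: "csubspace (L2X n)"
  unfolding csubspace_def
proof (intro conjI ballI allI)
  show "(\<lambda>_. 0) \<in> L2X n" unfolding L2X_def by simp
next
  fix \<phi> \<psi> :: "nat set \<Rightarrow> complex" assume A: "\<phi> \<in> L2X n" "\<psi> \<in> L2X n"
  show "(\<lambda>x. \<phi> x + \<psi> x) \<in> L2X n" unfolding L2X_def
  proof (intro CollectI allI impI)
    fix x assume "\<phi> x + \<psi> x \<noteq> 0"
    then have "\<phi> x \<noteq> 0 \<or> \<psi> x \<noteq> 0" by auto
    then show "x \<subseteq> {..<n}" using A unfolding L2X_def by blast
  qed
next
  fix c and \<psi> :: "nat set \<Rightarrow> complex" assume A: "\<psi> \<in> L2X n"
  show "(\<lambda>x. c * \<psi> x) \<in> L2X n" unfolding L2X_def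
  proof (intro CollectI allI impI)
    fix x assume "c * \<psi> x \<noteq> 0"
    then have "\<psi> x \<noteq> 0" by auto
    then show "x \<subseteq> {..<n}" using A unfolding L2X_def by blast
  qed
qed

context
  fixes n s r1 r2 :: nat
  assumes s1: "s \<le> r1" and s1': "r1 + s \<le> n" and s2: "s \<le> r2" and s2': "r2 + s \<le> n"
begin

definition "t0 = (restrict a0 {..<s}, restrict (b0 s) {..<s})"

lemma t0_TF: "t0 \<in> TF n s"
  unfolding t0_def TF_def TabA_def a0_def b0_def using s1 s1' by (auto simp: inj_on_def)

lemma T: "tab n s (fst t0) (snd t0)" by (rule TF_tab[OF t0_TF])

abbreviation "e0 \<equiv> polytabloid s (fst t0) (snd t0)"

lemma u_props:
  assumes r: "s \<le> r" "r + s \<le> n"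
  shows "\<And>F. F \<subseteq> {..<s} \<Longrightarrow> act (tau s (fst t0) (snd t0) F) (Up n r e0) = (\<lambda>x. (-1) ^ card F * Up n r e0 x)"
    and "\<And>\<pi>. \<pi> permutes {..<n} \<Longrightarrow> (\<forall>i<s. \<pi> (fst t0 i) = fst t0 i \<and> \<pi> (snd t0 i) = snd t0 i) \<Longrightarrow> act \<pi> (Up n r e0) = Up n r e0"
proof -
  fix F assume F: "F \<subseteq> {..<s}"
  show "act (tau s (fst t0) (snd t0) F) (Up n r e0) = (\<lambda>x. (-1) ^ card F * Up n r e0 x)"
    unfolding Up_act[OF tau_permutes[OF T F]] act_tau_pt[OF T F] Up_scale ..
next
  fix \<pi> assume p: "\<pi> permutes {..<n}" "\<forall>i<s. \<pi> (fst t0 i) = fst t0 i \<and> \<pi> (snd t0 i) = snd t0 i"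
  show "act \<pi> (Up n r e0) = Up n r e0"
    unfolding Up_act[OF p(1)] by (subst act_fix_pt[OF T p(1)]) (use p(2) in auto)
qed

lemma op_mult:
  assumes r: "s \<le> r" "r + s \<le> n" and r': "s \<le> r'" "r' + s \<le> n"
  shows "kernel_op n r r' lam (Up n r e0) = (\<lambda>x. kernel_op n r r' lam (Up n r e0) (x0 n s (fst t0) (snd t0) r') * Up n r' e0 x)"
proof -
  define K where "K = kernel_op n r r' lam (Up n r e0)"
  define \<mu> where "\<mu> = K (x0 n s (fst t0) (snd t0) r')"
  define h where "h = (\<lambda>x. 1 * K x + (- \<mu>) * Up n r' e0 x)"
  have "h = (\<lambda>_. 0)"
  proof (rule fix_lemma[OF T r'])
    show "h \<in> L2 n r'" unfolding h_def K_def
      by (rule csubspace_lin[OF csubspace_L2 kernel_op_L2 Up_L2])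
  next
    fix F assume F: "F \<subseteq> {..<s}"
    have "act (tau s (fst t0) (snd t0) F) K = (\<lambda>x. (-1) ^ card F * K x)"
      unfolding K_def kernel_op_act[OF tau_permutes[OF T F]] u_props(1)[OF r F] kernel_op_scale ..
    then show "act (tau s (fst t0) (snd t0) F) h = (\<lambda>x. (-1) ^ card F * h x)"
      unfolding h_def act_add act_scale u_props(1)[OF r' F] by (simp add: algebra_simps)
  next
    fix \<pi> assume p: "\<pi> permutes {..<n}" "\<forall>i<s. \<pi> (fst t0 i) = fst t0 i \<and> \<pi> (snd t0 i) = snd t0 i"
    have "act \<pi> K = K" unfolding K_def kernel_op_act[OF p(1)] u_props(2)[OF r p] ..
    then show "act \<pi> h = h" unfolding h_def act_add act_scale u_props(2)[OF r' p] by simp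
  next
    show "h (x0 n s (fst t0) (snd t0) r') = 0" unfolding h_def \<mu>_def Up_pt_x0[OF T r'] by simp
  qed
  then have "K x = \<mu> * Up n r' e0 x" for x unfolding h_def by (metis (no_types) add.inverse_inverse diff_minus_eq_add
      eq_iff_diff_eq_0 mult_1 mult_minus_left)
  then show ?thesis unfolding K_def[symmetric] \<mu>_def[symmetric] by auto
qed

lemma Up_pt_trans:
  assumes "tab n s a b"
  obtains g where "g permutes {..<n}" "Up n r (polytabloid s a b) = act g (Up n r e0)"
proof -
  obtain g where g: "g permutes {..<n}" "\<forall>i<s. g (fst t0 i) = a i \<and> g (snd t0 i) = b i"
    using tab_trans[OF T assms] by blast
  have "act g e0 = polytabloid s (g \<circ> fst t0) (g \<circ> snd t0)" by (rule act_pt[OF permutes_bij[OF g(1)]])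
  also have "\<dots> = polytabloid s a b" by (rule pt_cong) (use g in simp)
  finally show ?thesis using that[OF g(1)] Up_act[OF g(1)] by simp
qed

lemma op_kills:
  assumes r: "s \<le> r" "r + s \<le> n"
    and K0: "kernel_op n r r' lam (Up n r e0) = (\<lambda>_. 0)"
    and \<phi>: "\<phi> \<in> Vc n r s"
  shows "kernel_op n r r' lam \<phi> = (\<lambda>_. 0)"
proof -
  define S where "S = {\<theta>. kernel_op n r r' lam (Up n r \<theta>) = (\<lambda>_. 0)}"
  have cS: "csubspace S" unfolding S_def csubspace_def
    by (simp add: Up_zero Up_add Up_scale kernel_op_zero kernel_op_add kernel_op_scale)
  have "gens n s \<subseteq> S"
  proof
    fix f assume "f \<in> gens n s"
    then obtain a b where ab: "f = polytabloid s a b" "tab n s a b" unfolding gens_def by blast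
    obtain g where g: "g permutes {..<n}" "Up n r (polytabloid s a b) = act g (Up n r e0)"
      using Up_pt_trans[OF ab(2)] by blast
    have "kernel_op n r r' lam (Up n r f) = (\<lambda>_. 0)"
      unfolding ab(1) g(2) kernel_op_act[OF g(1), symmetric] K0 act_zero ..
    then show "f \<in> S" unfolding S_def by simp
  qed
  then have "Specht n s \<subseteq> S" unfolding Specht_gens by (rule cspan_least[OF cS])
  then show ?thesis using \<phi> unfolding Vc_def S_def by blast
qed


abbreviation "u1 \<equiv> Up n r1 e0"

lemma u1_UU: "u1 = UU n s r1 t0" unfolding UU_def ..

lemma MM_kernel: "MM n s r1 r1 \<psi> = kernel_op n r1 r1 (\<lambda>k. 2 ^ s * poly (Rod s r1 r1 n) (of_nat k)) \<psi>"
  by (rule KM[symmetric]) (use s1 s1' in auto)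

lemma MM_lin: "MM n s r1 r1 (\<lambda>x. c * \<phi> x + d * \<psi> x) = (\<lambda>x. c * MM n s r1 r1 \<phi> x + d * MM n s r1 r1 \<psi> x)"
  unfolding MM_kernel kernel_op_lin ..

lemma MM_act: "g permutes {..<n} \<Longrightarrow> act g (MM n s r1 r1 \<psi>) = MM n s r1 r1 (act g \<psi>)"
  unfolding MM_kernel by (rule kernel_op_act)

lemma inner_MM: "inner_L2 n (MM n s r1 r1 \<psi>) \<phi> = (\<Sum>t\<in>TF n s. inner_L2 n \<psi> (UU n s r1 t) * inner_L2 n (UU n s r1 t) \<phi>)"
  unfolding MM_def by (rule in2_sum_left)

lemma inner_MM_sym: "inner_L2 n (MM n s r1 r1 \<psi>) \<phi> = inner_L2 n \<psi> (MM n s r1 r1 \<phi>)"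
proof -
  have "inner_L2 n \<psi> (MM n s r1 r1 \<phi>) = (\<Sum>t\<in>TF n s. cnj (inner_L2 n \<phi> (UU n s r1 t)) * inner_L2 n \<psi> (UU n s r1 t))"
    unfolding MM_def by (rule in2_sum_right)
  also have "\<dots> = (\<Sum>t\<in>TF n s. inner_L2 n \<psi> (UU n s r1 t) * inner_L2 n (UU n s r1 t) \<phi>)"
    by (intro sum.cong refl) (simp add: in2_herm mult.commute)
  finally show ?thesis unfolding inner_MM by simp
qed

lemma inner_real_pos: "\<psi> \<in> L2X n \<Longrightarrow> \<psi> \<noteq> (\<lambda>_. 0) \<Longrightarrow> \<exists>R>0. inner_L2 n \<psi> \<psi> = of_real R"
proof -
  assume A: "\<psi> \<in> L2X n" "\<psi> \<noteq> (\<lambda>_. 0)"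
  define R where "R = (\<Sum>x\<in>Pow {..<n}. (cmod (\<psi> x))\<^sup>2)"
  have e: "inner_L2 n \<psi> \<psi> = of_real R" unfolding R_def by (rule in2_self)
  have "R \<ge> 0" unfolding R_def by (intro sum_nonneg) auto
  moreover have "R \<noteq> 0"
  proof
    assume "R = 0"
    then have "inner_L2 n \<psi> \<psi> = 0" using e by simp
    then show False using in2_self_eq0[OF A(1)] A(2) by blast
  qed
  ultimately show ?thesis using e by auto
qed

lemma alpha_exists: "\<exists>\<alpha>. \<alpha> \<noteq> 0 \<and> cnj \<alpha> = \<alpha> \<and> (\<forall>\<phi>\<in>Vc n r1 s. MM n s r1 r1 \<phi> = (\<lambda>x. \<alpha> * \<phi> x))"
proof -
  have r: "s \<le> r1" "r1 + s \<le> n" using s1 s1' by auto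
  define \<alpha> where "\<alpha> = kernel_op n r1 r1 (\<lambda>k. 2 ^ s * poly (Rod s r1 r1 n) (of_nat k)) u1 (x0 n s (fst t0) (snd t0) r1)"
  have Mu: "MM n s r1 r1 u1 = (\<lambda>x. \<alpha> * u1 x)"
    unfolding MM_kernel \<alpha>_def by (rule op_mult[OF r r])
  have all: "MM n s r1 r1 \<phi> = (\<lambda>x. \<alpha> * \<phi> x)" if \<phi>: "\<phi> \<in> Vc n r1 s" for \<phi>
  proof -
    define S where "S = {\<theta>. MM n s r1 r1 (Up n r1 \<theta>) = (\<lambda>x. \<alpha> * Up n r1 \<theta> x)}"
    have cS: "csubspace S" unfolding S_def csubspace_def
    proof (intro conjI ballI allI; simp)
      show "MM n s r1 r1 (Up n r1 (\<lambda>_. 0)) = (\<lambda>x. \<alpha> * Up n r1 (\<lambda>_. 0) x)"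
        unfolding Up_zero MM_kernel kernel_op_zero by simp
    next
      fix \<phi> \<psi> assume "MM n s r1 r1 (Up n r1 \<phi>) = (\<lambda>x. \<alpha> * Up n r1 \<phi> x)" "MM n s r1 r1 (Up n r1 \<psi>) = (\<lambda>x. \<alpha> * Up n r1 \<psi> x)"
      then show "MM n s r1 r1 (Up n r1 (\<lambda>x. \<phi> x + \<psi> x)) = (\<lambda>x. \<alpha> * Up n r1 (\<lambda>x. \<phi> x + \<psi> x) x)"
        using MM_lin[of 1 "Up n r1 \<phi>" 1 "Up n r1 \<psi>"] unfolding Up_add by (simp add: algebra_simps)
    next
      fix c \<psi> assume "MM n s r1 r1 (Up n r1 \<psi>) = (\<lambda>x. \<alpha> * Up n r1 \<psi> x)"
      then show "MM n s r1 r1 (Up n r1 (\<lambda>x. c * \<psi> x)) = (\<lambda>x. \<alpha> * Up n r1 (\<lambda>x. c * \<psi> x) x)"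
        using MM_lin[of c "Up n r1 \<psi>" 0 "Up n r1 \<psi>"] unfolding Up_scale by (simp add: algebra_simps)
    qed
    have "gens n s \<subseteq> S"
    proof
      fix f assume "f \<in> gens n s"
      then obtain a b where ab: "f = polytabloid s a b" "tab n s a b" unfolding gens_def by blast
      obtain g where g: "g permutes {..<n}" "Up n r1 (polytabloid s a b) = act g u1"
        using Up_pt_trans[OF ab(2)] by blast
      have "MM n s r1 r1 (Up n r1 f) = (\<lambda>x. \<alpha> * Up n r1 f x)"
        unfolding ab(1) g(2) MM_act[OF g(1), symmetric] Mu act_scale ..
      then show "f \<in> S" unfolding S_def by simp
    qed
    then have SS: "Specht n s \<subseteq> S" unfolding Specht_gens by (rule cspan_least[OF cS])
    obtain \<theta> where \<theta>: "\<theta> \<in> Specht n s" "\<phi> = Up n r1 \<theta>" using \<phi> unfolding Vc_def by blast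
    have "\<theta> \<in> S" using SS \<theta>(1) by blast
    then show ?thesis unfolding S_def \<theta>(2) by simp
  qed
  have u1L: "u1 \<in> L2X n" using Up_L2[of n r1 e0] L2_sub_L2X[of n r1] by blast
  have u1nz: "u1 \<noteq> (\<lambda>_. 0)" by (rule Up_pt_nonzero[OF T r])
  obtain R2 where R2: "R2 > 0" "inner_L2 n u1 u1 = of_real R2" using inner_real_pos[OF u1L u1nz] by blast
  define R1 where "R1 = (\<Sum>t\<in>TF n s. (cmod (inner_L2 n u1 (UU n s r1 t)))\<^sup>2)"
  have i1: "inner_L2 n (MM n s r1 r1 u1) u1 = of_real R1"
    unfolding inner_MM R1_def of_real_sum
  proof (intro sum.cong refl)
    fix t
    have "inner_L2 n (UU n s r1 t) u1 = cnj (inner_L2 n u1 (UU n s r1 t))" by (rule in2_herm[symmetric])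
    then show "inner_L2 n u1 (UU n s r1 t) * inner_L2 n (UU n s r1 t) u1 = of_real ((cmod (inner_L2 n u1 (UU n s r1 t)))\<^sup>2)"
      by (simp only: complex_norm_square)
  qed
  have "R1 \<ge> (cmod (inner_L2 n u1 (UU n s r1 t0)))\<^sup>2"
    unfolding R1_def by (rule member_le_sum) (auto simp: t0_TF finite_TF)
  moreover have "cmod (inner_L2 n u1 (UU n s r1 t0)) > 0" using R2 unfolding u1_UU[symmetric] by simp
  ultimately have R1: "R1 > 0" by (smt (verit) zero_less_power)
  have "inner_L2 n (MM n s r1 r1 u1) u1 = \<alpha> * inner_L2 n u1 u1"
    unfolding Mu using in2_lin_left[of n \<alpha> u1 0 u1 u1] by simp
  then have "\<alpha> * of_real R2 = of_real R1" using i1 R2 by simp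
  then have "\<alpha> = of_real (R1 / R2)" using R2(1) by (simp add: field_simps)
  then have "\<alpha> \<noteq> 0 \<and> cnj \<alpha> = \<alpha>" using R1 R2 by simp
  then show ?thesis using all by (intro exI[of _ \<alpha>]) auto
qed

lemma op_kills_all:
  assumes K0: "kernel_op n r1 r2 lam u1 = (\<lambda>_. 0)"
    and Kp: "\<And>\<psi>. \<psi> \<in> L2X n \<Longrightarrow> (\<forall>\<phi>\<in>Vc n r1 s. inner_L2 n \<psi> \<phi> = 0) \<Longrightarrow> kernel_op n r1 r2 lam \<psi> = (\<lambda>_. 0)"
    and x: "x1 \<in> Xr n r1" "x2 \<in> Xr n r2"
  shows "lam (card (x2 - x1)) = 0"
proof -
  have r: "s \<le> r1" "r1 + s \<le> n" using s1 s1' by auto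
  obtain \<alpha> where \<alpha>: "\<alpha> \<noteq> 0" "cnj \<alpha> = \<alpha>" "\<And>\<phi>. \<phi> \<in> Vc n r1 s \<Longrightarrow> MM n s r1 r1 \<phi> = (\<lambda>x. \<alpha> * \<phi> x)"
    using alpha_exists by blast
  define \<psi> where "\<psi> = (\<lambda>x. if x = x1 then 1 else (0::complex))"
  have \<psi>L: "\<psi> \<in> L2X n" unfolding \<psi>_def L2X_def using x unfolding Xr_def by auto
  define \<psi>p where "\<psi>p = (\<lambda>x. inverse \<alpha> * MM n s r1 r1 \<psi> x)"
  define \<psi>q where "\<psi>q = (\<lambda>x. 1 * \<psi> x + (- 1) * \<psi>p x)"
  have pV: "\<psi>p \<in> Vc n r1 s" unfolding \<psi>p_def by (rule csubspace_scale[OF csubspace_Vc MM_in_Vc])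
  have pL: "\<psi>p \<in> L2X n" using pV Vc_L2 L2_sub_L2X by blast
  have qL: "\<psi>q \<in> L2X n" unfolding \<psi>q_def by (rule csubspace_lin[OF csubspace_L2X \<psi>L pL])
  have qperp: "\<forall>\<phi>\<in>Vc n r1 s. inner_L2 n \<psi>q \<phi> = 0"
  proof
    fix \<phi> assume \<phi>: "\<phi> \<in> Vc n r1 s"
    have "inner_L2 n \<psi>p \<phi> = inverse \<alpha> * inner_L2 n (MM n s r1 r1 \<psi>) \<phi>"
      unfolding \<psi>p_def using in2_lin_left[of n "inverse \<alpha>" "MM n s r1 r1 \<psi>" 0 \<psi> \<phi>] by simp
    also have "\<dots> = inverse \<alpha> * inner_L2 n \<psi> (\<lambda>x. \<alpha> * \<phi> x)" unfolding inner_MM_sym \<alpha>(3)[OF \<phi>] ..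
    also have "\<dots> = inner_L2 n \<psi> \<phi>"
      using in2_lin_right[of n \<psi> \<alpha> \<phi> 0 \<phi>] \<alpha>(1,2) by simp
    finally show "inner_L2 n \<psi>q \<phi> = 0" unfolding \<psi>q_def in2_lin_left by simp
  qed
  have "kernel_op n r1 r2 lam \<psi>p = (\<lambda>_. 0)" by (rule op_kills[OF r K0 pV])
  moreover have "kernel_op n r1 r2 lam \<psi>q = (\<lambda>_. 0)" by (rule Kp[OF qL qperp])
  moreover have "\<psi> = (\<lambda>x. 1 * \<psi>p x + 1 * \<psi>q x)" unfolding \<psi>q_def by auto
  ultimately have "kernel_op n r1 r2 lam \<psi> = (\<lambda>_. 0)" by (metis (no_types) kernel_op_lin mult_zero_right add.right_neutral)
  then have "kernel_op n r1 r2 lam \<psi> x2 = 0" by simp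
  then show ?thesis unfolding \<psi>_def kernel_op_delta[OF x] .
qed

end


context
  fixes n s r1 r2 :: nat
  assumes s1: "s \<le> r1" and s1': "r1 + s \<le> n" and s2: "s \<le> r2" and s2': "r2 + s \<le> n"
begin

definition "Kset = {r2 - r1 .. r2 - r1 + s}"

lemma card_Kset: "card Kset = Suc s" unfolding Kset_def by simp

lemma realized:
  assumes k: "k \<in> Kset"
  shows "\<exists>x1\<in>Xr n r1. \<exists>x2\<in>Xr n r2. card (x2 - x1) = k"
proof -
  have k1: "r2 \<le> r1 + k" "k \<le> r2" "r1 + k \<le> n" using k s1 s1' s2 s2' unfolding Kset_def by auto
  define x1 where "x1 = {..<r1}"
  define x2 where "x2 = {r1 + k - r2..<r1 + k}"
  have "x1 \<in> Xr n r1" unfolding x1_def Xr_def using s1' by auto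
  moreover have "x2 \<in> Xr n r2" unfolding x2_def Xr_def using k1 by auto
  moreover have "x2 - x1 = {r1..<r1 + k}" unfolding x1_def x2_def using k1 by auto
  ultimately show ?thesis by (intro bexI[of _ x1] bexI[of _ x2]) auto
qed

lemma vanish:
  fixes P :: "complex poly"
  assumes d: "degree P \<le> s" and z: "\<And>k. k \<in> Kset \<Longrightarrow> poly P (of_nat k) = 0"
  shows "P = 0"
proof (rule poly_eqI_degree[of "of_nat ` Kset :: complex set" P 0])
  fix x :: complex assume "x \<in> of_nat ` Kset"
  then show "poly P x = poly 0 x" using z by auto
next
  have "card (of_nat ` Kset :: complex set) = Suc s"
    using card_image[of "of_nat :: nat \<Rightarrow> complex" Kset] card_Kset by (simp add: inj_on_def)
  then show "degree P < card (of_nat ` Kset :: complex set)" "degree (0 :: complex poly) < card (of_nat ` Kset :: complex set)"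
    using d by auto
qed

lemma Z:
  assumes K0: "kernel_op n r1 r2 (\<lambda>k. poly P (of_nat k)) (Up n r1 (polytabloid s (fst (t0 s)) (snd (t0 s)))) = (\<lambda>_. 0)"
    and Kp: "\<And>\<psi>. \<psi> \<in> L2X n \<Longrightarrow> (\<forall>\<phi>\<in>Vc n r1 s. inner_L2 n \<psi> \<phi> = 0) \<Longrightarrow> kernel_op n r1 r2 (\<lambda>k. poly P (of_nat k)) \<psi> = (\<lambda>_. 0)"
    and d: "degree P \<le> s"
  shows "P = 0"
proof (rule vanish[OF d])
  fix k assume "k \<in> Kset"
  then obtain x1 x2 where x: "x1 \<in> Xr n r1" "x2 \<in> Xr n r2" "card (x2 - x1) = k" using realized by blast
  show "poly P (of_nat k) = 0"
    using op_kills_all[OF s1 s1' s2 s2' K0 Kp x(1,2)] x(3) by simp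
qed

definition "F12 = ffact_c (of_nat (n - r1)) s * ffact_c (of_nat r2) s"
definition "q = smult (inverse F12) (Rod s r1 r2 n)"

lemma ffact_nz: "k \<le> m \<Longrightarrow> ffact_c (of_nat m) k \<noteq> 0"
  unfolding ffact_c_def by (auto simp: prod_zero_iff)

lemma F12_nz: "F12 \<noteq> 0"
  unfolding F12_def using ffact_nz[of s "n - r1"] ffact_nz[of s r2] s1' s2 by auto

lemma q_deg: "degree q = s"
  unfolding q_def using F12_nz Rod_degree[of s n r1 r2] s1 s1' by simp

lemma q_0: "poly q 0 = 1"
proof -
  have "poly (Rod s r1 r2 n) 0 = ffact_c (of_nat r2) s * ffact_c (of_nat n - of_nat r1) s"
    by (rule Rod_at0) (use s1 s1' s2 in auto)
  also have "(of_nat n - of_nat r1 :: complex) = of_nat (n - r1)" using s1' by (simp add: of_nat_diff)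
  finally show ?thesis unfolding q_def F12_def using F12_nz[unfolded F12_def] by (simp add: field_simps)
qed

lemma Kq: "kernel_op n r1 r2 (\<lambda>k. poly q (of_nat k)) \<psi> = (\<lambda>x. (inverse F12 / 2 ^ s) * MM n s r1 r2 \<psi> x)"
proof -
  have "kernel_op n r1 r2 (\<lambda>k. poly q (of_nat k)) \<psi>
      = kernel_op n r1 r2 (\<lambda>k. (inverse F12 / 2 ^ s) * (2 ^ s * poly (Rod s r1 r2 n) (of_nat k)) + 0 * 0) \<psi>"
    unfolding q_def by simp
  also have "\<dots> = (\<lambda>x. (inverse F12 / 2 ^ s) * kernel_op n r1 r2 (\<lambda>k. 2 ^ s * poly (Rod s r1 r2 n) (of_nat k)) \<psi> x + 0 * kernel_op n r1 r2 (\<lambda>k. 0) \<psi> x)"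
    by (rule kernel_op_lam_lin)
  also have "\<dots> = (\<lambda>x. (inverse F12 / 2 ^ s) * MM n s r1 r2 \<psi> x)"
    using KM[OF s1 s1' s2 s2'] by simp
  finally show ?thesis .
qed

lemma Kq_perp: "(\<forall>\<phi>\<in>Vc n r1 s. inner_L2 n \<psi> \<phi> = 0) \<Longrightarrow> kernel_op n r1 r2 (\<lambda>k. poly q (of_nat k)) \<psi> = (\<lambda>_. 0)"
  unfolding Kq MM_def using UU_in_Vc by auto

lemma L2c1: "L2comp n r1 s = Vc n r1 s" by (rule L2comp_eq) (use s1 s1' in auto)
lemma L2c2: "L2comp n r2 s = Vc n r2 s" by (rule L2comp_eq) (use s2 s2' in auto)

theorem lambda_eq: "lambda_poly n r1 r2 s = q"
  unfolding lambda_poly_def Let_def L2c1 L2c2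
proof (rule the_equality)
  show "degree q = s \<and> poly q 0 = 1 \<and>
    (\<forall>\<psi>\<in>Vc n r1 s. kernel_op n r1 r2 (\<lambda>k. poly q (of_nat k)) \<psi> \<in> Vc n r2 s) \<and>
    (\<forall>\<psi>\<in>L2X n. (\<forall>\<phi>\<in>Vc n r1 s. inner_L2 n \<psi> \<phi> = 0) \<longrightarrow> kernel_op n r1 r2 (\<lambda>k. poly q (of_nat k)) \<psi> = (\<lambda>_. 0))"
  proof (intro conjI ballI impI)
    show "degree q = s" by (rule q_deg)
    show "poly q 0 = 1" by (rule q_0)
  next
    fix \<psi> assume "\<psi> \<in> Vc n r1 s"
    show "kernel_op n r1 r2 (\<lambda>k. poly q (of_nat k)) \<psi> \<in> Vc n r2 s"
      unfolding Kq by (rule csubspace_scale[OF csubspace_Vc MM_in_Vc])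
  next
    fix \<psi> assume "\<psi> \<in> L2X n" "\<forall>\<phi>\<in>Vc n r1 s. inner_L2 n \<psi> \<phi> = 0"
    then show "kernel_op n r1 r2 (\<lambda>k. poly q (of_nat k)) \<psi> = (\<lambda>_. 0)" using Kq_perp by blast
  qed
next
  fix p assume P: "degree p = s \<and> poly p 0 = 1 \<and>
    (\<forall>\<psi>\<in>Vc n r1 s. kernel_op n r1 r2 (\<lambda>k. poly p (of_nat k)) \<psi> \<in> Vc n r2 s) \<and>
    (\<forall>\<psi>\<in>L2X n. (\<forall>\<phi>\<in>Vc n r1 s. inner_L2 n \<psi> \<phi> = 0) \<longrightarrow> kernel_op n r1 r2 (\<lambda>k. poly p (of_nat k)) \<psi> = (\<lambda>_. 0))"
  then have pd: "degree p = s" and p0: "poly p 0 = 1"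
    and pperp: "\<And>\<psi>. \<psi> \<in> L2X n \<Longrightarrow> (\<forall>\<phi>\<in>Vc n r1 s. inner_L2 n \<psi> \<phi> = 0) \<Longrightarrow> kernel_op n r1 r2 (\<lambda>k. poly p (of_nat k)) \<psi> = (\<lambda>_. 0)"
    by auto
  define u1 where "u1 = Up n r1 (polytabloid s (fst (t0 s)) (snd (t0 s)))"
  define u2 where "u2 = Up n r2 (polytabloid s (fst (t0 s)) (snd (t0 s)))"
  define xx where "xx = x0 n s (fst (t0 s)) (snd (t0 s)) r2"
  define \<mu> where "\<mu> = kernel_op n r1 r2 (\<lambda>k. poly p (of_nat k)) u1 xx"
  define \<nu> where "\<nu> = kernel_op n r1 r2 (\<lambda>k. poly q (of_nat k)) u1 xx"
  have Kpu: "kernel_op n r1 r2 (\<lambda>k. poly p (of_nat k)) u1 = (\<lambda>x. \<mu> * u2 x)"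
    unfolding \<mu>_def u1_def u2_def xx_def by (rule op_mult[OF s1 s1' s2 s2' s1 s1' s2 s2'])
  have Kqu: "kernel_op n r1 r2 (\<lambda>k. poly q (of_nat k)) u1 = (\<lambda>x. \<nu> * u2 x)"
    unfolding \<nu>_def u1_def u2_def xx_def by (rule op_mult[OF s1 s1' s2 s2' s1 s1' s2 s2'])
  have \<nu>0: "\<nu> \<noteq> 0"
  proof
    assume "\<nu> = 0"
    then have "kernel_op n r1 r2 (\<lambda>k. poly q (of_nat k)) u1 = (\<lambda>_. 0)" unfolding Kqu by simp
    then have K0: "kernel_op n r1 r2 (\<lambda>k. poly q (of_nat k)) (Up n r1 (polytabloid s (fst (t0 s)) (snd (t0 s)))) = (\<lambda>_. 0)"
      unfolding u1_def .
    have "q = 0"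
    proof (rule Z[OF K0])
      fix \<psi> assume "\<psi> \<in> L2X n" "\<forall>\<phi>\<in>Vc n r1 s. inner_L2 n \<psi> \<phi> = 0"
      then show "kernel_op n r1 r2 (\<lambda>k. poly q (of_nat k)) \<psi> = (\<lambda>_. 0)" using Kq_perp by blast
    next
      show "degree q \<le> s" using q_deg by simp
    qed
    then show False using q_0 by simp
  qed
  define c where "c = \<mu> / \<nu>"
  define D where "D = p - smult c q"
  have KD: "kernel_op n r1 r2 (\<lambda>k. poly D (of_nat k)) \<psi> =
      (\<lambda>x. 1 * kernel_op n r1 r2 (\<lambda>k. poly p (of_nat k)) \<psi> x + (- c) * kernel_op n r1 r2 (\<lambda>k. poly q (of_nat k)) \<psi> x)" for \<psi>
  proof -
    have "kernel_op n r1 r2 (\<lambda>k. poly D (of_nat k)) \<psi> = kernel_op n r1 r2 (\<lambda>k. 1 * poly p (of_nat k) + (- c) * poly q (of_nat k)) \<psi>"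
      unfolding D_def by simp
    then show ?thesis by (simp only: kernel_op_lam_lin)
  qed
  have "D = 0"
  proof (rule Z)
    show "kernel_op n r1 r2 (\<lambda>k. poly D (of_nat k)) (Up n r1 (polytabloid s (fst (t0 s)) (snd (t0 s)))) = (\<lambda>_. 0)"
    proof -
      have e: "- (\<mu> / \<nu>) * (\<nu> * y) = - (\<mu> * y)" for y using \<nu>0 by (simp add: field_simps)
      show ?thesis unfolding u1_def[symmetric] KD Kpu Kqu c_def e by simp
    qed
  next
    fix \<psi> assume "\<psi> \<in> L2X n" "\<forall>\<phi>\<in>Vc n r1 s. inner_L2 n \<psi> \<phi> = 0"
    then have "kernel_op n r1 r2 (\<lambda>k. poly p (of_nat k)) \<psi> = (\<lambda>_. 0)"
      "kernel_op n r1 r2 (\<lambda>k. poly q (of_nat k)) \<psi> = (\<lambda>_. 0)" using pperp Kq_perp by blast+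
    then show "kernel_op n r1 r2 (\<lambda>k. poly D (of_nat k)) \<psi> = (\<lambda>_. 0)"
      unfolding KD by simp
  next
    have "degree D \<le> max (degree p) (degree (smult c q))" unfolding D_def by (rule degree_diff_le_max)
    moreover have "degree (smult c q) \<le> s" using degree_smult_le[of c q] q_deg by simp
    ultimately show "degree D \<le> s" using pd by simp
  qed
  then have pq: "p = smult c q" unfolding D_def by simp
  then have "c = 1" using p0 q_0 by simp
  then show "p = q" using pq by simp
qed

end

lemma ffact_fact: "k \<le> m \<Longrightarrow> ffact_c (of_nat m) k * fact (m - k) = fact m"
proof (induction k)
  case 0
  then show ?case by (simp add: ffact_c_def)
next
  case (Suc k)
  have f: "fact (m - k) = (of_nat (m - k) :: complex) * fact (m - Suc k)"
    using Suc.prems by (metis Suc_diff_Suc fact_Suc Suc_le_lessD diff_Suc_1 of_nat_mult mult.commute fact_Suc_0 Suc_diff_le)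
  have "ffact_c (of_nat m) (Suc k) = ffact_c (of_nat m) k * (of_nat m - of_nat k)"
    unfolding ffact_c_def by simp
  also have "(of_nat m - of_nat k :: complex) = of_nat (m - k)" using Suc.prems by (simp add: of_nat_diff)
  finally show ?case using Suc f by (simp add: mult.assoc)
qed


lemma final_alg:
  fixes A B C X Y Z :: complex
  assumes "A * B = C" "C \<noteq> 0"
  shows "Z * (inverse X * Y) = A / X * (B / C * Z * Y)"
proof -
  have "A / X * (B / C * Z * Y) = (A * B) * inverse C * (Z * Y * inverse X)" by (simp add: divide_inverse mult_ac)
  also have "\<dots> = Z * Y * inverse X" using assms by simp
  finally show ?thesis by (simp add: mult_ac)
qed


theorem mainTheorem13:
  fixes n r1 r2 s :: nat
  assumes "n \<ge> 1" and "r1 \<le> n" and "r2 \<le> n" and "s \<le> Nmin n r1 r2"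
  shows "\<forall>t::complex. omega r1 r2 t n * poly (lambda_poly n r1 r2 s) t =
     ffact_c (of_nat n) (2 * s) / (ffact_c (of_nat (n - r1)) s * ffact_c (of_nat r2) s)
       * (nabla ^^ s) (\<lambda>u. omega (r1 - s) (r2 - s) u (n - 2 * s)) t"
proof
  fix t :: complex
  have s1: "s \<le> r1" "r1 + s \<le> n" "s \<le> r2" "r2 + s \<le> n" using assms unfolding Nmin_def by auto
  have L: "lambda_poly n r1 r2 s = q n s r1 r2" by (rule lambda_eq[OF s1])
  have R: "(nabla ^^ s) (\<lambda>u. omega (r1 - s) (r2 - s) u (n - 2 * s))
      = (\<lambda>t. fact (n - 2 * s) / fact n * omega r1 r2 t n * poly (Rod s r1 r2 n) t)"
    by (rule rodrigues) (use s1 in auto)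
  have FF: "ffact_c (of_nat n) (2 * s) * fact (n - 2 * s) = fact n" by (rule ffact_fact) (use s1 in auto)
  show "omega r1 r2 t n * poly (lambda_poly n r1 r2 s) t =
     ffact_c (of_nat n) (2 * s) / (ffact_c (of_nat (n - r1)) s * ffact_c (of_nat r2) s)
       * (nabla ^^ s) (\<lambda>u. omega (r1 - s) (r2 - s) u (n - 2 * s)) t"
    unfolding L R q_def[OF s1] F12_def[OF s1] poly_smult
    by (rule final_alg[OF FF fact_nonzero])
qed


end
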